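(* Let $Q:\mathbb{R}^d\to\mathbb{R}$ be continuous with $|Q|$ positive homogeneous, with unital level set $S=\{\eta:|Q(\eta)|=1\}$ and homogeneous order $\mu$. Let $\mathcal U$ be an open neighborhood of $0$ and $\widetilde Q\in C^2(\mathcal U;\mathbb{R})$. Given $E\in\mathrm{Exp}(Q)$, set $F=E/\mu$ and $f_{n,y,\eta}(\theta)=Q(\theta^F\eta)+n\widetilde Q(n^{-E}\theta^F\eta)+y\cdot(\theta^F\eta)$ for $n\in\mathbb{N}_+$, $y\in\mathbb{R}^d$, $\eta\in S$, $\theta>0$ with $n^{-E}\theta^F\eta\in\mathcal U$. If $\mu<1$ and $\widetilde Q$ is strongly subhomogeneous with respect to $E$ of order $2$, then for each compact $K\subseteq\mathbb{R}^d$ there exist $\delta>0$ and $\theta_0\ge1$ such that, for every $n\in\mathbb{N}_+$ with $\theta_0\le(n\delta)^\mu$, $\theta\mapsto\partial_\theta f_{n,y,\eta}(\theta)$ is defined and monotonic on $[\theta_0,(n\delta)^\mu]$ and $|\partial_\theta f_{n,y,\eta}(\theta)|\ge\frac{1}{2\mu}\theta^{1/\mu-1}$ for all $\theta_0\le\theta\le(n\delta)^\mu$, $y\in K$, $\eta\in S$.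
   Context: For $E\in\mathrm{End}(\mathbb{R}^d)$, $t>0$, $t^E:=\exp(\log(t)E)$. $P$ homogeneous w.r.t. $E$: $P(t^E\xi)=tP(\xi)$ for all $t>0,\xi$; $\mathrm{Exp}(P)$ = set of such $E$. Positive homogeneous: real, continuous, positive definite ($\ge0$, zero only at $0$), $\mathrm{Exp}(P)\ne\emptyset$, $\{P=1\}$ compact; homogeneous order $\mathrm{tr}E$ for $E\in\mathrm{Exp}(P)$. For continuous real $Q$ with $|Q|$ positive homogeneous, $\mathrm{Exp}(Q)=\mathrm{Exp}(|Q|)$. Given $E$ with $\lim_{t\to0}\|t^E\|=0$, a function $\widetilde Q\in C^l$ near $0$ is strongly subhomogeneous w.r.t. $E$ of order $l$ if for each $\epsilon>0$ and compact $K$ there is $\tau>0$ with $|t^k\partial_t^k\widetilde Q(t^E\xi)|\le\epsilon t$ for all $k\in\{0,\dots,l\}$, $0<t<\tau$, $\xi\in K$. *)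

theory Defs
  imports "HOL-Analysis.Analysis"
begin

text \<open>Endomorphisms of R^d are modelled as linear maps E :: 'a \<Rightarrow> 'a on a
  Euclidean space 'a (dimension d = DIM('a)).\<close>

definition tpow :: "real \<Rightarrow> ('a::euclidean_space \<Rightarrow> 'a) \<Rightarrow> 'a \<Rightarrow> 'a" where
  "tpow t E \<xi> = (\<Sum>k. ((ln t) ^ k / fact k) *\<^sub>R (E ^^ k) \<xi>)"

definition trace_op :: "('a::euclidean_space \<Rightarrow> 'a) \<Rightarrow> real" where
  "trace_op E = (\<Sum>b\<in>Basis. inner (E b) b)"

definition homogeneous_wrt :: "('a::euclidean_space \<Rightarrow> real) \<Rightarrow> ('a \<Rightarrow> 'a) \<Rightarrow> bool" where
  "homogeneous_wrt P E \<longleftrightarrow> (\<forall>t>0. \<forall>\<xi>. P (tpow t E \<xi>) = t * P \<xi>)"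

definition Exps :: "('a::euclidean_space \<Rightarrow> real) \<Rightarrow> ('a \<Rightarrow> 'a) set" where
  "Exps P = {E. linear E \<and> homogeneous_wrt P E}"

definition positive_homogeneous :: "('a::euclidean_space \<Rightarrow> real) \<Rightarrow> bool" where
  "positive_homogeneous P \<longleftrightarrow>
     continuous_on UNIV P \<and> (\<forall>\<xi>. P \<xi> \<ge> 0) \<and> (\<forall>\<xi>. P \<xi> = 0 \<longleftrightarrow> \<xi> = 0) \<and>
     Exps P \<noteq> {} \<and> compact {\<xi>. P \<xi> = 1}"

definition C2_on :: "'a::euclidean_space set \<Rightarrow> ('a \<Rightarrow> real) \<Rightarrow> bool" where
  "C2_on U f \<longleftrightarrow> open U \<and>
     (\<exists>f' :: 'a \<Rightarrow> ('a \<Rightarrow>\<^sub>L real). \<exists>f'' :: 'a \<Rightarrow> ('a \<Rightarrow>\<^sub>L ('a \<Rightarrow>\<^sub>L real)).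
        (\<forall>x\<in>U. (f has_derivative blinfun_apply (f' x)) (at x)) \<and>
        (\<forall>x\<in>U. (f' has_derivative blinfun_apply (f'' x)) (at x)) \<and>
        continuous_on U f'')"

definition strongly_subhomogeneous ::
  "('a::euclidean_space \<Rightarrow> real) \<Rightarrow> ('a \<Rightarrow> 'a) \<Rightarrow> nat \<Rightarrow> bool" where
  "strongly_subhomogeneous Qt E l \<longleftrightarrow>
     (\<forall>\<epsilon>>0. \<forall>K. compact K \<longrightarrow>
        (\<exists>\<tau>>0. \<forall>k\<le>l. \<forall>t. 0 < t \<and> t < \<tau> \<longrightarrow> (\<forall>\<xi>\<in>K.
           \<bar>t ^ k * (deriv ^^ k) (\<lambda>s. Qt (tpow s E \<xi>)) t\<bar> \<le> \<epsilon> * t)))"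

end

theory Submission
  imports Defs "Jordan_Normal_Form.Determinant"
begin

definition ue :: "('a::euclidean_space \<Rightarrow> 'a) \<Rightarrow> real \<Rightarrow> 'a \<Rightarrow> 'a" where
  "ue E \<tau> \<xi> = (\<Sum>k. (\<tau> ^ k / fact k) *\<^sub>R (E ^^ k) \<xi>)"

lemma tpow_ue: "tpow t E \<xi> = ue E (ln t) \<xi>"
  by (simp add: tpow_def ue_def)

lemma linear_funpow:
  fixes E :: "'a::real_vector \<Rightarrow> 'a"
  assumes "linear E" shows "linear (E ^^ k)"
proof (induction k)
  case 0 show ?case using real_vector.linear_ident by simp
next
  case (Suc k) then show ?case using linear_compose[OF Suc assms] by (simp add: comp_def)
qed

lemma linear_bound_pos:
  fixes E :: "'a::euclidean_space \<Rightarrow> 'a"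
  assumes "linear E" shows "\<exists>B>0. \<forall>x. norm (E x) \<le> B * norm x"
proof -
  have "bounded_linear E" using assms by (simp add: linear_conv_bounded_linear)
  then show ?thesis using bounded_linear.pos_bounded by (metis mult.commute)
qed

lemma funpow_bound:
  fixes E :: "'a::euclidean_space \<Rightarrow> 'a"
  assumes "\<And>x. norm (E x) \<le> B * norm x" "B \<ge> 0"
  shows "norm ((E ^^ k) x) \<le> B ^ k * norm x"
proof (induction k)
  case 0 then show ?case by simp
next
  case (Suc k)
  have "norm ((E ^^ Suc k) x) = norm (E ((E ^^ k) x))" by simp
  also have "\<dots> \<le> B * norm ((E ^^ k) x)" using assms(1) .
  also have "\<dots> \<le> B * (B ^ k * norm x)" using Suc assms(2) by (simp add: mult_left_mono)
  finally show ?case by simp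
qed

lemma ue_summable:
  fixes E :: "'a::euclidean_space \<Rightarrow> 'a"
  assumes "linear E"
  shows "summable (\<lambda>k. (\<tau> ^ k / fact k) *\<^sub>R (E ^^ k) \<xi>)"
proof -
  obtain B where B: "B > 0" "\<And>x. norm (E x) \<le> B * norm x" using linear_bound_pos[OF assms] by blast
  have s: "summable (\<lambda>k. inverse (fact k) * (\<bar>\<tau>\<bar> * B) ^ k)" by (rule summable_exp)
  show ?thesis
  proof (rule summable_comparison_test'[where N=0])
    show "summable (\<lambda>k. inverse (fact k) * (\<bar>\<tau>\<bar> * B) ^ k * norm \<xi>)"
      using summable_mult2[OF s] .
    fix k :: nat
    have "norm ((\<tau> ^ k / fact k) *\<^sub>R (E ^^ k) \<xi>) = \<bar>\<tau>\<bar> ^ k / fact k * norm ((E ^^ k) \<xi>)"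
      by (simp add: power_abs)
    also have "\<dots> \<le> \<bar>\<tau>\<bar> ^ k / fact k * (B ^ k * norm \<xi>)"
      by (rule mult_left_mono[OF funpow_bound[OF B(2)]]) (use B in auto)
    also have "\<dots> = inverse (fact k) * (\<bar>\<tau>\<bar> * B) ^ k * norm \<xi>"
      by (simp add: power_mult_distrib field_simps)
    finally show "norm ((\<tau> ^ k / fact k) *\<^sub>R (E ^^ k) \<xi>) \<le> inverse (fact k) * (\<bar>\<tau>\<bar> * B) ^ k * norm \<xi>" .
  qed
qed

lemma ue_norm_bound:
  fixes E :: "'a::euclidean_space \<Rightarrow> 'a"
  assumes "linear E" "\<And>x. norm (E x) \<le> B * norm x" "B \<ge> 0"
  shows "norm (ue E \<tau> \<xi>) \<le> exp (\<bar>\<tau>\<bar> * B) * norm \<xi>"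
proof -
  have s: "summable (\<lambda>k. inverse (fact k) * (\<bar>\<tau>\<bar> * B) ^ k * norm \<xi>)"
    using summable_mult2[OF summable_exp] .
  have "norm (ue E \<tau> \<xi>) \<le> (\<Sum>k. inverse (fact k) * (\<bar>\<tau>\<bar> * B) ^ k * norm \<xi>)"
    unfolding ue_def
  proof (rule norm_suminf_le[OF _ s])
    fix k
    have "norm ((\<tau> ^ k / fact k) *\<^sub>R (E ^^ k) \<xi>) = \<bar>\<tau>\<bar> ^ k / fact k * norm ((E ^^ k) \<xi>)"
      by (simp add: power_abs)
    also have "\<dots> \<le> \<bar>\<tau>\<bar> ^ k / fact k * (B ^ k * norm \<xi>)"
      by (rule mult_left_mono[OF funpow_bound[OF assms(2,3)]]) auto
    also have "\<dots> = inverse (fact k) * (\<bar>\<tau>\<bar> * B) ^ k * norm \<xi>"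
      by (simp add: power_mult_distrib field_simps)
    finally show "norm ((\<tau> ^ k / fact k) *\<^sub>R (E ^^ k) \<xi>) \<le> inverse (fact k) * (\<bar>\<tau>\<bar> * B) ^ k * norm \<xi>" .
  qed
  also have "\<dots> = (\<Sum>k. inverse (fact k) * (\<bar>\<tau>\<bar> * B) ^ k) * norm \<xi>"
    by (rule suminf_mult2[OF summable_exp, symmetric])
  also have "(\<Sum>k. inverse (fact k) * (\<bar>\<tau>\<bar> * B) ^ k) = exp (\<bar>\<tau>\<bar> * B)"
    using exp_converges[of "\<bar>\<tau>\<bar> * B"] by (simp add: sums_iff divide_inverse mult.commute)
  finally show ?thesis by simp
qed

lemma ue_add_arg:
  fixes E :: "'a::euclidean_space \<Rightarrow> 'a"
  assumes "linear E" shows "ue E \<tau> (x + y) = ue E \<tau> x + ue E \<tau> y"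
proof -
  have "ue E \<tau> x + ue E \<tau> y = (\<Sum>k. (\<tau> ^ k / fact k) *\<^sub>R (E ^^ k) x + (\<tau> ^ k / fact k) *\<^sub>R (E ^^ k) y)"
    unfolding ue_def by (rule suminf_add[OF ue_summable[OF assms] ue_summable[OF assms]])
  also have "\<dots> = ue E \<tau> (x + y)" unfolding ue_def
    by (simp add: linear_add[OF linear_funpow[OF assms]] scaleR_add_right)
  finally show ?thesis by simp
qed

lemma ue_scale_arg:
  fixes E :: "'a::euclidean_space \<Rightarrow> 'a"
  assumes "linear E" shows "ue E \<tau> (c *\<^sub>R x) = c *\<^sub>R ue E \<tau> x"
proof -
  have "c *\<^sub>R ue E \<tau> x = (\<Sum>k. c *\<^sub>R ((\<tau> ^ k / fact k) *\<^sub>R (E ^^ k) x))"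
    unfolding ue_def by (rule suminf_scaleR_right[OF ue_summable[OF assms]])
  also have "\<dots> = ue E \<tau> (c *\<^sub>R x)" unfolding ue_def
    by (simp add: linear_cmul[OF linear_funpow[OF assms]] mult.commute)
  finally show ?thesis by simp
qed

lemma ue_linear:
  fixes E :: "'a::euclidean_space \<Rightarrow> 'a"
  assumes "linear E" shows "linear (ue E \<tau>)"
  by (rule linearI) (simp_all add: ue_add_arg[OF assms] ue_scale_arg[OF assms])

lemma ue_bounded_linear_app:
  fixes E :: "'a::euclidean_space \<Rightarrow> 'a" and L :: "'a \<Rightarrow> 'b::real_normed_vector"
  assumes "linear E" "bounded_linear L"
  shows "L (ue E \<tau> \<xi>) = (\<Sum>k. (\<tau> ^ k / fact k) *\<^sub>R L ((E ^^ k) \<xi>))"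
  unfolding ue_def
  by (simp add: bounded_linear.suminf[OF assms(2) ue_summable[OF assms(1)]]
        linear_cmul[OF bounded_linear.linear[OF assms(2)]])

lemma ue_commute:
  fixes E :: "'a::euclidean_space \<Rightarrow> 'a"
  assumes "linear E" shows "E (ue E \<tau> \<xi>) = ue E \<tau> (E \<xi>)"
proof -
  have bl: "bounded_linear E" using assms by (simp add: linear_conv_bounded_linear)
  show ?thesis
    unfolding ue_bounded_linear_app[OF assms bl]
    by (simp add: ue_def funpow_swap1)
qed

lemma ue_zero: "ue E 0 \<xi> = \<xi>"
proof -
  have "(\<lambda>k. (0 ^ k / fact k) *\<^sub>R (E ^^ k) \<xi>) = (\<lambda>k. if k = 0 then (E ^^ k) \<xi> else 0)"
    by (auto simp: fun_eq_iff)
  then have "(\<lambda>k. ((0::real) ^ k / fact k) *\<^sub>R (E ^^ k) \<xi>) sums \<xi>"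
    using sums_single[of 0 "\<lambda>k. (E ^^ k) \<xi>"] by simp
  then show ?thesis unfolding ue_def by (rule sums_unique[symmetric])
qed

lemma ue_inner:
  fixes E :: "'a::euclidean_space \<Rightarrow> 'a"
  assumes "linear E"
  shows "inner (ue E \<tau> \<xi>) b = (\<Sum>k. (inner ((E ^^ k) \<xi>) b / fact k) * \<tau> ^ k)"
  using ue_bounded_linear_app[OF assms bounded_linear_inner_left[of b], of \<tau> \<xi>]
  by (simp add: field_simps)

lemma ue_deriv:
  fixes E :: "'a::euclidean_space \<Rightarrow> 'a"
  assumes "linear E"
  shows "((\<lambda>\<tau>. ue E \<tau> \<xi>) has_vector_derivative E (ue E \<tau> \<xi>)) (at \<tau>)"
proof -
  define c where "c b k = inner ((E ^^ k) \<xi>) b / fact k" for b k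
  have rep: "(\<lambda>\<tau>. ue E \<tau> \<xi>) = (\<lambda>\<tau>. \<Sum>b\<in>Basis. (\<Sum>k. c b k * \<tau> ^ k) *\<^sub>R b)"
  proof (rule ext)
    fix \<tau>
    show "ue E \<tau> \<xi> = (\<Sum>b\<in>Basis. (\<Sum>k. c b k * \<tau> ^ k) *\<^sub>R b)"
      by (subst euclidean_representation[symmetric, of "ue E \<tau> \<xi>"]) (simp add: ue_inner[OF assms] c_def)
  qed
  have summ: "summable (\<lambda>n. c b n * y ^ n)" for b y
  proof -
    have "summable (\<lambda>k. inner ((y ^ k / fact k) *\<^sub>R (E ^^ k) \<xi>) b)"
      by (rule bounded_linear.summable[OF bounded_linear_inner_left ue_summable[OF assms]])
    then show ?thesis by (simp add: c_def field_simps)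
  qed
  have d: "((\<lambda>\<tau>. \<Sum>k. c b k * \<tau> ^ k) has_field_derivative inner (ue E \<tau> (E \<xi>)) b) (at \<tau>)" for b
  proof -
    have "((\<lambda>\<tau>. \<Sum>k. c b k * \<tau> ^ k) has_field_derivative (\<Sum>k. diffs (c b) k * \<tau> ^ k)) (at \<tau>)"
      by (rule termdiffs_strong_converges_everywhere[OF summ])
    moreover have "diffs (c b) k = inner ((E ^^ k) (E \<xi>)) b / fact k" for k
      by (simp add: diffs_def c_def funpow_Suc_right del: funpow.simps)
    ultimately show ?thesis by (simp add: ue_inner[OF assms])
  qed
  have "((\<lambda>\<tau>. \<Sum>b\<in>Basis. (\<Sum>k. c b k * \<tau> ^ k) *\<^sub>R b) has_vector_derivative
          (\<Sum>b\<in>Basis. inner (ue E \<tau> (E \<xi>)) b *\<^sub>R b)) (at \<tau>)"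
    by (intro has_vector_derivative_sum)
      (use has_vector_derivative_scaleR[OF d has_vector_derivative_const] in simp)
  then show ?thesis
    by (simp add: rep euclidean_representation ue_commute[OF assms])
qed

lemma ode_unique:
  fixes z :: "real \<Rightarrow> 'a::euclidean_space" and E :: "'a \<Rightarrow> 'a"
  assumes lin: "linear E" and d: "\<And>s. (z has_vector_derivative E (z s)) (at s)" and z0: "z 0 = 0"
  shows "z \<tau> = 0"
proof -
  obtain B where B: "B > 0" "\<And>x. norm (E x) \<le> B * norm x" using linear_bound_pos[OF lin] by blast
  define \<phi> where "\<phi> s = inner (z s) (z s)" for s
  have dphi: "(\<phi> has_real_derivative 2 * inner (z s) (E (z s))) (at s)" for s
  proof -
    have "(\<phi> has_derivative (\<lambda>h. inner (z s) (h *\<^sub>R E (z s)) + inner (h *\<^sub>R E (z s)) (z s))) (at s)"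
      unfolding \<phi>_def
      by (rule has_derivative_inner[OF d[unfolded has_vector_derivative_def] d[unfolded has_vector_derivative_def]])
    then show ?thesis
      unfolding has_field_derivative_def
      by (rule has_derivative_eq_rhs) (auto simp: fun_eq_iff inner_commute algebra_simps)
  qed
  have bnd: "\<bar>inner (z s) (E (z s))\<bar> \<le> B * \<phi> s" for s
  proof -
    have "\<bar>inner (z s) (E (z s))\<bar> \<le> norm (z s) * norm (E (z s))" by (rule Cauchy_Schwarz_ineq2)
    also have "\<dots> \<le> norm (z s) * (B * norm (z s))" by (rule mult_left_mono[OF B(2)]) simp
    also have "\<dots> = B * \<phi> s" by (simp add: \<phi>_def power2_norm_eq_inner[symmetric] power2_eq_square)
    finally show ?thesis .
  qed
  have phi_nonneg: "\<phi> s \<ge> 0" for s by (simp add: \<phi>_def)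
  have "\<phi> \<tau> = 0"
  proof (cases "\<tau> \<ge> 0")
    case True
    define \<psi> where "\<psi> s = \<phi> s * exp (- (2 * B) * s)" for s
    have "\<psi> \<tau> \<le> \<psi> 0"
    proof (rule DERIV_nonpos_imp_nonincreasing[of 0 \<tau> \<psi>, OF True])
      fix x
      have "(\<psi> has_real_derivative 2 * inner (z x) (E (z x)) * exp (- (2 * B) * x)
              + \<phi> x * (exp (- (2 * B) * x) * (- (2 * B)))) (at x)"
        unfolding \<psi>_def by (intro derivative_eq_intros dphi) (auto intro: dphi)
      moreover have "2 * inner (z x) (E (z x)) * exp (- (2 * B) * x)
              + \<phi> x * (exp (- (2 * B) * x) * (- (2 * B))) \<le> 0"
      proof -
        have "inner (z x) (E (z x)) \<le> B * \<phi> x" using bnd[of x] by linarith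
        then have "2 * inner (z x) (E (z x)) - 2 * B * \<phi> x \<le> 0" by linarith
        then have "(2 * inner (z x) (E (z x)) - 2 * B * \<phi> x) * exp (- (2 * B) * x) \<le> 0"
          by (simp add: mult_nonpos_nonneg)
        then show ?thesis by (simp add: algebra_simps)
      qed
      ultimately show "\<exists>y. (\<psi> has_real_derivative y) (at x) \<and> y \<le> 0" by blast
    qed
    moreover have "\<psi> 0 = 0" by (simp add: \<psi>_def \<phi>_def z0)
    ultimately have "\<phi> \<tau> * exp (- (2 * B) * \<tau>) \<le> 0" by (simp add: \<psi>_def)
    then show ?thesis using phi_nonneg[of \<tau>] by (simp add: mult_le_0_iff)
  next
    case False
    define \<psi> where "\<psi> s = \<phi> s * exp ((2 * B) * s)" for s
    have "\<psi> \<tau> \<le> \<psi> 0"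
    proof (rule DERIV_nonneg_imp_nondecreasing[of \<tau> 0 \<psi>])
      show "\<tau> \<le> 0" using False by simp
      fix x
      have "(\<psi> has_real_derivative 2 * inner (z x) (E (z x)) * exp ((2 * B) * x)
              + \<phi> x * (exp ((2 * B) * x) * (2 * B))) (at x)"
        unfolding \<psi>_def by (intro derivative_eq_intros dphi) (auto intro: dphi)
      moreover have "2 * inner (z x) (E (z x)) * exp ((2 * B) * x)
              + \<phi> x * (exp ((2 * B) * x) * (2 * B)) \<ge> 0"
      proof -
        have "- inner (z x) (E (z x)) \<le> B * \<phi> x" using bnd[of x] by linarith
        then have "2 * inner (z x) (E (z x)) + 2 * B * \<phi> x \<ge> 0" by linarith
        then have "(2 * inner (z x) (E (z x)) + 2 * B * \<phi> x) * exp ((2 * B) * x) \<ge> 0"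
          by simp
        then show ?thesis by (simp add: algebra_simps)
      qed
      ultimately show "\<exists>y. (\<psi> has_real_derivative y) (at x) \<and> y \<ge> 0" by blast
    qed
    moreover have "\<psi> 0 = 0" by (simp add: \<psi>_def \<phi>_def z0)
    ultimately have "\<phi> \<tau> * exp ((2 * B) * \<tau>) \<le> 0" by (simp add: \<psi>_def)
    then show ?thesis using phi_nonneg[of \<tau>] by (simp add: mult_le_0_iff)
  qed
  then show ?thesis by (simp add: \<phi>_def)
qed

lemma ue_deriv_shift:
  fixes E :: "'a::euclidean_space \<Rightarrow> 'a"
  assumes "linear E"
  shows "((\<lambda>s. ue E (s + c) \<xi>) has_vector_derivative E (ue E (s + c) \<xi>)) (at s)"
proof -
  have "((\<lambda>s. s + c) has_vector_derivative 1) (at s)"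
    by (auto intro!: derivative_eq_intros simp: has_real_derivative_iff_has_vector_derivative[symmetric])
  from vector_diff_chain_at[OF this ue_deriv[OF assms, of \<xi> "s + c"]]
  show ?thesis by (simp add: o_def)
qed

lemma ue_add:
  fixes E :: "'a::euclidean_space \<Rightarrow> 'a"
  assumes lin: "linear E"
  shows "ue E (\<sigma> + \<tau>) \<xi> = ue E \<sigma> (ue E \<tau> \<xi>)"
proof -
  define z where "z s = ue E (s + \<tau>) \<xi> - ue E s (ue E \<tau> \<xi>)" for s
  have "z \<sigma> = 0"
  proof (rule ode_unique[OF lin])
    fix s
    have "(z has_vector_derivative E (ue E (s + \<tau>) \<xi>) - E (ue E s (ue E \<tau> \<xi>))) (at s)"
      unfolding z_def by (intro has_vector_derivative_diff ue_deriv_shift[OF lin] ue_deriv[OF lin])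
    then show "(z has_vector_derivative E (z s)) (at s)"
      by (simp add: z_def linear_diff[OF lin])
    show "z 0 = 0" by (simp add: z_def ue_zero)
  qed
  then show ?thesis by (simp add: z_def)
qed

lemma tpow_linear: "linear E \<Longrightarrow> linear (tpow t E)"
  unfolding tpow_ue[abs_def] by (rule ue_linear)

lemma tpow_mult:
  fixes E :: "'a::euclidean_space \<Rightarrow> 'a"
  assumes "linear E" "s > 0" "t > 0"
  shows "tpow s E (tpow t E \<xi>) = tpow (s * t) E \<xi>"
  using assms by (simp add: tpow_ue ln_mult ue_add)

lemma tpow_one: "tpow 1 E \<xi> = \<xi>"
  by (simp add: tpow_ue ue_zero)

lemma funpow_scale:
  fixes E :: "'a::euclidean_space \<Rightarrow> 'a"
  assumes "linear E"
  shows "((\<lambda>x. c *\<^sub>R E x) ^^ k) \<xi> = c ^ k *\<^sub>R (E ^^ k) \<xi>"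
  by (induction k) (simp_all add: linear_cmul[OF assms])

lemma tpow_scale:
  fixes E :: "'a::euclidean_space \<Rightarrow> 'a"
  assumes "linear E" "\<theta> > 0"
  shows "tpow \<theta> (\<lambda>x. c *\<^sub>R E x) \<xi> = tpow (\<theta> powr c) E \<xi>"
  using assms by (simp add: tpow_def funpow_scale ln_powr power_mult_distrib mult.commute)

lemma tpow_deriv:
  fixes E :: "'a::euclidean_space \<Rightarrow> 'a"
  assumes lin: "linear E" and t: "t > 0"
  shows "((\<lambda>t. tpow t E \<xi>) has_vector_derivative (1 / t) *\<^sub>R E (tpow t E \<xi>)) (at t)"
proof -
  have "(ln has_vector_derivative (1 / t)) (at t)"
    using DERIV_ln_divide[OF t] by (simp add: has_real_derivative_iff_has_vector_derivative)
  from vector_diff_chain_at[OF this ue_deriv[OF lin, of \<xi> "ln t"]]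
  show ?thesis by (simp add: o_def tpow_ue[abs_def])
qed

lemma tpow_cont:
  fixes E :: "'a::euclidean_space \<Rightarrow> 'a"
  assumes lin: "linear E"
  shows "continuous_on {0<..} (\<lambda>t. tpow t E \<xi>)"
  by (rule continuous_at_imp_continuous_on)
     (auto intro: has_vector_derivative_continuous[OF tpow_deriv[OF lin]])

lemma lyap_bounded:
  fixes P :: "'a::euclidean_space \<Rightarrow> real" and E :: "'a \<Rightarrow> 'a"
  assumes P_cont: "continuous_on UNIV P" and P_pos: "\<And>x. P x = 0 \<longleftrightarrow> x = 0"
    and P_nn: "\<And>x. P x \<ge> 0" and lin: "linear E"
    and hom: "\<And>t \<xi>. t > 0 \<Longrightarrow> P (tpow t E \<xi>) = t * P \<xi>"
  shows "\<exists>M>0. \<forall>t x. 0 < t \<and> t \<le> 1 \<and> norm x \<le> 1 \<longrightarrow> norm (tpow t E x) \<le> M"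
proof -
  obtain b :: 'a where b: "b \<in> Basis" using nonempty_Basis by blast
  have sne: "sphere (0::'a) 1 \<noteq> {}" using b by (auto simp: sphere_def intro!: exI[of _ b])
  obtain x0 where x0: "x0 \<in> sphere 0 1" "\<And>y. y \<in> sphere 0 1 \<Longrightarrow> P x0 \<le> P y"
    using continuous_attains_inf[OF compact_sphere sne continuous_on_subset[OF P_cont]] by auto
  define m where "m = P x0"
  have m: "m > 0" using x0(1) P_pos[of x0] P_nn[of x0] by (auto simp: m_def)
  have "isCont P 0" using P_cont by (simp add: continuous_on_eq_continuous_at)
  then obtain \<delta> where \<delta>: "\<delta> > 0" "\<And>x. dist x 0 < \<delta> \<Longrightarrow> dist (P x) (P 0) < m"
    using m unfolding continuous_at_eps_delta by blast
  define \<delta>' where "\<delta>' = min \<delta> 1"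
  have P0: "P 0 = 0" using P_pos by simp
  have small: "norm (tpow t E x) < 1" if x: "norm x < \<delta>'" and t: "0 < t" "t \<le> 1" for t x
  proof (rule ccontr)
    assume "\<not> norm (tpow t E x) < 1"
    then have ge: "norm (tpow t E x) \<ge> 1" by simp
    have c: "continuous_on {t..1} (\<lambda>s. norm (tpow s E x))"
      by (intro continuous_on_norm continuous_on_subset[OF tpow_cont[OF lin]]) (use t in auto)
    have "norm (tpow 1 E x) \<le> 1" using x by (simp add: tpow_one \<delta>'_def)
    from IVT2'[of "\<lambda>s. norm (tpow s E x)", OF this ge t(2) c]
    obtain s where s: "t \<le> s" "s \<le> 1" "norm (tpow s E x) = 1" by auto
    then have "P x0 \<le> P (tpow s E x)" using x0(2) by auto
    also have "\<dots> = s * P x" using hom[of s x] s t by simp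
    also have "\<dots> \<le> P x" using s t P_nn[of x] by (intro mult_left_le_one_le) auto
    also have "\<dots> < m" using \<delta>(2)[of x] x P0 by (simp add: \<delta>'_def dist_norm)
    finally show False by (simp add: m_def)
  qed
  have \<delta>'_pos: "\<delta>' > 0" using \<delta> by (simp add: \<delta>'_def)
  show ?thesis
  proof (intro exI[of _ "2 / \<delta>'"] conjI allI impI)
    show "2 / \<delta>' > 0" using \<delta>'_pos by simp
    fix t :: real and x :: 'a assume h: "0 < t \<and> t \<le> 1 \<and> norm x \<le> 1"
    have "norm ((\<delta>' / 2) *\<^sub>R x) < \<delta>'" using h \<delta>'_pos
      by (simp add: abs_of_pos)
    then have "norm (tpow t E ((\<delta>' / 2) *\<^sub>R x)) < 1" using small h by blast
    then have "(\<delta>' / 2) * norm (tpow t E x) < 1"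
      using \<delta>'_pos by (simp add: linear_cmul[OF tpow_linear[OF lin]] abs_of_pos)
    then show "norm (tpow t E x) \<le> 2 / \<delta>'" using \<delta>'_pos by (simp add: field_simps)
  qed
qed

lemma lyap_decay:
  fixes P :: "'a::euclidean_space \<Rightarrow> real" and E :: "'a \<Rightarrow> 'a"
  assumes P_cont: "continuous_on UNIV P" and P_pos: "\<And>x. P x = 0 \<longleftrightarrow> x = 0"
    and P_nn: "\<And>x. P x \<ge> 0" and lin: "linear E"
    and hom: "\<And>t \<xi>. t > 0 \<Longrightarrow> P (tpow t E \<xi>) = t * P \<xi>"
    and eps: "\<epsilon> > 0"
  shows "\<exists>t0>0. t0 \<le> 1 \<and> (\<forall>t x. 0 < t \<and> t \<le> t0 \<and> norm x \<le> 1 \<longrightarrow> norm (tpow t E x) \<le> \<epsilon>)"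
proof -
  obtain M where M: "M > 0" "\<And>t x. 0 < t \<Longrightarrow> t \<le> 1 \<Longrightarrow> norm x \<le> 1 \<Longrightarrow> norm (tpow t E x) \<le> M"
    using lyap_bounded[OF assms(1-5)] by blast
  show ?thesis
  proof (cases "M < \<epsilon>")
    case True
    then show ?thesis using M by (intro exI[of _ 1]) force
  next
    case False
    define A where "A = {y::'a. \<epsilon> \<le> norm y \<and> norm y \<le> M}"
    have cA: "compact A" unfolding A_def
      unfolding compact_eq_bounded_closed
      by (auto simp: bounded_iff intro!: closed_Collect_conj closed_Collect_le continuous_intros)
    obtain b :: 'a where b: "b \<in> Basis" using nonempty_Basis by blast
    have "\<epsilon> *\<^sub>R b \<in> A" using b False eps by (auto simp: A_def)
    then have Ane: "A \<noteq> {}" by blast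
    obtain y0 where y0: "y0 \<in> A" "\<And>y. y \<in> A \<Longrightarrow> P y0 \<le> P y"
      using continuous_attains_inf[OF cA Ane continuous_on_subset[OF P_cont]] by auto
    have m: "P y0 > 0" using y0(1) eps P_pos[of y0] P_nn[of y0] by (auto simp: A_def)
    have cb: "cball (0::'a) 1 \<noteq> {}" by auto
    obtain x1 where x1: "x1 \<in> cball 0 1" "\<And>y. y \<in> cball 0 1 \<Longrightarrow> P y \<le> P x1"
      using continuous_attains_sup[OF compact_cball cb continuous_on_subset[OF P_cont]] by auto
    define t0 where "t0 = min 1 (P y0 / (P x1 + 1))"
    have PX: "P x1 \<ge> 0" by (rule P_nn)
    have t0: "t0 > 0" "t0 \<le> 1" using m PX by (auto simp: t0_def)
    show ?thesis
    proof (intro exI[of _ t0] conjI allI impI t0)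
      fix t and x :: 'a assume h: "0 < t \<and> t \<le> t0 \<and> norm x \<le> 1"
      have nM: "norm (tpow t E x) \<le> M" using M(2)[of t x] h t0 by auto
      have "P (tpow t E x) = t * P x" using hom h by auto
      also have "\<dots> \<le> t * P x1" using x1(2)[of x] h by (intro mult_left_mono) auto
      also have "\<dots> \<le> (P y0 / (P x1 + 1)) * P x1"
        using h PX by (intro mult_right_mono) (auto simp: t0_def)
      also have "\<dots> < P y0" using m PX by (simp add: field_simps)
      finally have lt: "P (tpow t E x) < P y0" .
      show "norm (tpow t E x) \<le> \<epsilon>"
      proof (rule ccontr)
        assume "\<not> norm (tpow t E x) \<le> \<epsilon>"
        then have "tpow t E x \<in> A" using nM by (auto simp: A_def)
        then show False using y0(2) lt by force
      qed
    qed
  qed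
qed


definition bl :: "'a::euclidean_space list" where
  "bl = (SOME xs. set xs = Basis \<and> distinct xs)"

lemma bl: "set (bl :: 'a::euclidean_space list) = Basis" "distinct (bl :: 'a list)"
proof -
  have "\<exists>xs. set xs = (Basis :: 'a set) \<and> distinct xs" by (rule finite_distinct_list) simp
  then have "set (bl :: 'a list) = Basis \<and> distinct (bl :: 'a list)" unfolding bl_def by (rule someI_ex)
  then show "set (bl :: 'a::euclidean_space list) = Basis" "distinct (bl :: 'a list)" by auto
qed

lemma bl_length: "length (bl :: 'a::euclidean_space list) = DIM('a)"
  using distinct_card[OF bl(2)[where 'a='a]] bl(1)[where 'a='a] by simp

lemma bl_nth: "i < DIM('a) \<Longrightarrow> (bl :: 'a::euclidean_space list) ! i \<in> Basis"
  using bl(1)[where 'a='a] bl_length[where 'a='a] nth_mem by (metis)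

lemma bl_inner: "i < DIM('a) \<Longrightarrow> j < DIM('a) \<Longrightarrow>
   inner ((bl :: 'a::euclidean_space list) ! i) (bl ! j) = (if i = j then 1 else 0)"
  using bl(2)[where 'a='a] bl_length[where 'a='a] bl_nth[where 'a='a, of i] bl_nth[where 'a='a, of j]
  by (auto simp: inner_Basis nth_eq_iff_index_eq)

lemma sum_Basis_bl: "(\<Sum>b\<in>(Basis :: 'a::euclidean_space set). f b) = (\<Sum>k<DIM('a). f (bl ! k))"
proof -
  have "bij_betw ((!) (bl :: 'a list)) {..<DIM('a)} Basis"
    by (rule bij_betw_nth[OF bl(2)]) (simp_all add: bl_length bl(1))
  then show ?thesis by (rule sum.reindex_bij_betw[symmetric])
qed

lemma Basis_bl_ex: "b \<in> (Basis :: 'a::euclidean_space set) \<Longrightarrow> \<exists>j<DIM('a). b = bl ! j"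
  using bl(1) bl_length by (metis in_set_conv_nth)

definition matr :: "('a::euclidean_space \<Rightarrow> 'a) \<Rightarrow> real mat" where
  "matr L = Matrix.mat DIM('a) DIM('a) (\<lambda>(i,j). inner (L (bl ! j)) (bl ! i))"

lemma matr_carrier: "matr (L :: 'a::euclidean_space \<Rightarrow> 'a) \<in> carrier_mat DIM('a) DIM('a)"
  by (simp add: matr_def)

lemma matr_dim[simp]: "dim_row (matr (L :: 'a::euclidean_space \<Rightarrow> 'a)) = DIM('a)"
   "dim_col (matr (L :: 'a::euclidean_space \<Rightarrow> 'a)) = DIM('a)"
  by (simp_all add: matr_def)

lemma matr_index: "i < DIM('a) \<Longrightarrow> j < DIM('a) \<Longrightarrow>
    matr (L :: 'a::euclidean_space \<Rightarrow> 'a) $$ (i,j) = inner (L (bl ! j)) (bl ! i)"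
  by (simp add: matr_def)

lemma basis_expand: "(x :: 'a::euclidean_space) = (\<Sum>k<DIM('a). inner x (bl ! k) *\<^sub>R bl ! k)"
  using euclidean_representation[of x] by (simp add: sum_Basis_bl)

lemma matr_comp:
  fixes L1 L2 :: "'a::euclidean_space \<Rightarrow> 'a"
  assumes "linear L1"
  shows "matr (\<lambda>x. L1 (L2 x)) = matr L1 * matr L2"
proof (rule eq_matI)
  fix i j assume i: "i < dim_row (matr L1 * matr L2)" and j: "j < dim_col (matr L1 * matr L2)"
  then have i': "i < DIM('a)" and j': "j < DIM('a)" by auto
  have "L1 (L2 (bl ! j)) = (\<Sum>k<DIM('a). inner (L2 (bl ! j)) (bl ! k) *\<^sub>R L1 (bl ! k))"
    by (subst basis_expand[of "L2 (bl ! j)"]) (simp add: linear_sum[OF assms] linear_cmul[OF assms])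
  then have "inner (L1 (L2 (bl ! j))) (bl ! i) = (\<Sum>k<DIM('a). inner (L1 (bl ! k)) (bl ! i) * inner (L2 (bl ! j)) (bl ! k))"
    by (simp add: inner_sum_left mult.commute)
  also have "\<dots> = (matr L1 * matr L2) $$ (i, j)"
    using i' j'
    by (simp add: scalar_prod_def matr_index lessThan_atLeast0)
  finally show "matr (\<lambda>x. L1 (L2 x)) $$ (i, j) = (matr L1 * matr L2) $$ (i, j)"
    using i' j' by (simp add: matr_index)
qed auto

lemma matr_id: "matr (\<lambda>x::'a::euclidean_space. x) = 1\<^sub>m DIM('a)"
  by (rule eq_matI) (auto simp: matr_index bl_inner)

definition Dt :: "('a::euclidean_space \<Rightarrow> 'a) \<Rightarrow> real \<Rightarrow> real" where
  "Dt E \<tau> = Determinant.det (matr (ue E \<tau>))"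

lemma matr_ue_add:
  fixes E :: "'a::euclidean_space \<Rightarrow> 'a"
  assumes lin: "linear E"
  shows "matr (ue E (\<sigma> + \<tau>)) = matr (ue E \<sigma>) * matr (ue E \<tau>)"
proof -
  have "ue E (\<sigma> + \<tau>) = (\<lambda>x. ue E \<sigma> (ue E \<tau> x))" by (rule ext) (simp add: ue_add[OF lin])
  then have "matr (ue E (\<sigma> + \<tau>)) = matr (\<lambda>x. ue E \<sigma> (ue E \<tau> x))" by simp
  also have "\<dots> = matr (ue E \<sigma>) * matr (ue E \<tau>)" by (rule matr_comp[OF ue_linear[OF lin]])
  finally show ?thesis .
qed

lemma Dt_add:
  fixes E :: "'a::euclidean_space \<Rightarrow> 'a"
  assumes lin: "linear E"
  shows "Dt E (\<sigma> + \<tau>) = Dt E \<sigma> * Dt E \<tau>"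
  unfolding Dt_def matr_ue_add[OF lin] by (rule det_mult[OF matr_carrier matr_carrier])

lemma Dt_zero: "Dt (E :: 'a::euclidean_space \<Rightarrow> 'a) 0 = 1"
proof -
  have "ue E 0 = (\<lambda>x. x)" by (rule ext) (simp add: ue_zero)
  then show ?thesis by (simp add: Dt_def matr_id)
qed

lemma Dt_expand:
  fixes E :: "'a::euclidean_space \<Rightarrow> 'a"
  shows "Dt E \<tau> = (\<Sum>p\<in>{p. p permutes {0..<DIM('a)}}. signof p *
            (\<Prod>i=0..<DIM('a). inner (ue E \<tau> (bl ! (p i))) (bl ! i)))"
  unfolding Dt_def det_def'[OF matr_carrier]
  by (intro sum.cong refl arg_cong2[where f="(*)"] prod.cong)
     (auto simp: matr_index permutes_in_image)

lemma entry_deriv: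
  fixes E :: "'a::euclidean_space \<Rightarrow> 'a"
  assumes lin: "linear E"
  shows "((\<lambda>\<tau>. inner (ue E \<tau> b) c) has_field_derivative inner (E (ue E \<tau> b)) c) (at \<tau>)"
  using bounded_linear.has_vector_derivative[OF bounded_linear_inner_left ue_deriv[OF lin, of b \<tau>], of c]
  by (simp add: has_real_derivative_iff_has_vector_derivative)

lemma perm_two_moved:
  assumes p: "p permutes {0..<n}" and ne: "p \<noteq> id"
  shows "\<exists>j\<in>{0..<n} - {i}. p j \<noteq> j"
proof -
  obtain j0 where j0: "p j0 \<noteq> j0" using ne by (auto simp: fun_eq_iff)
  have j0n: "j0 \<in> {0..<n}" using j0 p by (meson permutes_not_in)
  define j1 where "j1 = p j0"
  have j1n: "j1 \<in> {0..<n}" using permutes_in_image[OF p, of j0] j0n by (simp add: j1_def)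
  have j1j0: "j1 \<noteq> j0" using j0 by (simp add: j1_def)
  have pj1: "p j1 \<noteq> j1"
  proof
    assume "p j1 = j1"
    then have "p j1 = p j0" by (simp add: j1_def)
    then have "j1 = j0" using permutes_inj[OF p] by (simp add: inj_eq)
    then show False using j1j0 by simp
  qed
  show ?thesis
  proof (cases "i = j0")
    case True then show ?thesis using j1n pj1 j1j0 by auto
  next
    case False then show ?thesis using j0n j0 by auto
  qed
qed

lemma Dt_deriv0:
  fixes E :: "'a::euclidean_space \<Rightarrow> 'a"
  assumes lin: "linear E"
  shows "(Dt E has_field_derivative trace_op E) (at 0)"
proof -
  let ?n = "DIM('a)"
  let ?P = "{p. p permutes {0..<?n}}"
  define m where "m i k \<tau> = inner (ue E \<tau> (bl ! k)) (bl ! i)" for i k \<tau>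
  define m' where "m' i k = inner (E (bl ! k)) (bl ! i)" for i k
  have m0: "m j k 0 = (if j = k then 1 else 0)" if "j < ?n" "k < ?n" for j k
    using that by (simp add: m_def ue_zero bl_inner)
  have dm: "((m i k) has_field_derivative m' i k) (at 0)" for i k
    using entry_deriv[OF lin, of "bl ! k" "bl ! i" 0] by (simp add: m_def[abs_def] m'_def ue_zero)
  have Dfun: "Dt E = (\<lambda>\<tau>. \<Sum>p\<in>?P. signof p * (\<Prod>i=0..<?n. m i (p i) \<tau>))"
    by (rule ext) (simp add: Dt_expand m_def)
  have tm: "signof p * (\<Sum>i\<in>{0..<?n}. m' i (p i) * (\<Prod>j\<in>{0..<?n} - {i}. m j (p j) 0))
     = (if p = id then (\<Sum>i\<in>{0..<?n}. m' i i) else 0)" if p: "p \<in> ?P" for p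
  proof (cases "p = id")
    case True
    have "(\<Prod>j\<in>{0..<?n} - {i}. m j j 0) = 1" for i by (intro prod.neutral) (auto simp: m0)
    then show ?thesis using True by simp
  next
    case False
    have pz: "(\<Prod>j\<in>{0..<?n} - {i}. m j (p j) 0) = 0" for i
    proof -
      have pp: "p permutes {0..<?n}" using p by simp
      obtain j where j: "j \<in> {0..<?n} - {i}" "p j \<noteq> j" using perm_two_moved[OF pp False, of i] by blast
      have "p j < ?n" using j p by (auto simp: permutes_in_image)
      then have "m j (p j) 0 = 0" using j m0[of j "p j"] by auto
      then show ?thesis using j by (intro prod_zero) auto
    qed
    have "(\<Sum>i\<in>{0..<?n}. m' i (p i) * (\<Prod>j\<in>{0..<?n} - {i}. m j (p j) 0)) = 0"
      by (intro sum.neutral ballI) (simp only: pz mult_zero_right)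
    then show ?thesis using False by simp
  qed
  have "((\<lambda>\<tau>. \<Sum>p\<in>?P. signof p * (\<Prod>i=0..<?n. m i (p i) \<tau>)) has_field_derivative
     (\<Sum>p\<in>?P. signof p * (\<Sum>i\<in>{0..<?n}. m' i (p i) * (\<Prod>j\<in>{0..<?n} - {i}. m j (p j) 0)))) (at 0)"
    by (intro DERIV_sum DERIV_cmult has_field_derivative_prod dm)
  also have "(\<Sum>p\<in>?P. signof p * (\<Sum>i\<in>{0..<?n}. m' i (p i) * (\<Prod>j\<in>{0..<?n} - {i}. m j (p j) 0)))
      = (\<Sum>p\<in>?P. if p = id then (\<Sum>i\<in>{0..<?n}. m' i i) else 0)"
    by (rule sum.cong[OF refl tm]) 
  also have "\<dots> = (\<Sum>i\<in>{0..<?n}. m' i i)"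
    by (subst sum.delta) (auto simp: permutes_id finite_permutations)
  also have "\<dots> = trace_op E"
    by (simp add: trace_op_def sum_Basis_bl m'_def lessThan_atLeast0)
  finally show ?thesis unfolding Dfun .
qed

lemma Dt_exp:
  fixes E :: "'a::euclidean_space \<Rightarrow> 'a"
  assumes lin: "linear E"
  shows "Dt E \<tau> = exp (trace_op E * \<tau>)"
proof -
  let ?\<mu> = "trace_op E"
  have dD: "(Dt E has_field_derivative ?\<mu> * Dt E x) (at x)" for x
  proof -
    have "((\<lambda>h. Dt E x * Dt E h) has_field_derivative Dt E x * ?\<mu>) (at 0)"
      by (intro DERIV_cmult Dt_deriv0[OF lin])
    then have "((\<lambda>h. Dt E (h + x)) has_field_derivative Dt E x * ?\<mu>) (at 0)"
      by (simp add: Dt_add[OF lin] mult.commute)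
    then show ?thesis using DERIV_shift[of "Dt E" "Dt E x * ?\<mu>" 0 x] by (simp add: mult.commute)
  qed
  define g where "g s = Dt E s * exp (- ?\<mu> * s)" for s
  have "\<forall>x. (g has_real_derivative 0) (at x)"
  proof
    fix x
    have e: "((\<lambda>s. exp (- ?\<mu> * s)) has_real_derivative exp (- ?\<mu> * x) * (- ?\<mu>)) (at x)"
      by (auto intro!: derivative_eq_intros)
    have "(g has_real_derivative ?\<mu> * Dt E x * exp (- ?\<mu> * x) + exp (- ?\<mu> * x) * (- ?\<mu>) * Dt E x) (at x)"
      unfolding g_def by (rule DERIV_mult[OF dD e])
    then show "(g has_real_derivative 0) (at x)" by (simp add: algebra_simps)
  qed
  then have "g \<tau> = g 0" by (rule DERIV_isconst_all)
  then have "Dt E \<tau> * exp (- ?\<mu> * \<tau>) = 1" by (simp add: g_def Dt_zero)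
  then show ?thesis by (simp add: exp_minus field_simps)
qed

lemma det_bound:
  fixes A :: "real mat"
  assumes A: "A \<in> carrier_mat n n" and b: "\<And>i j. i < n \<Longrightarrow> j < n \<Longrightarrow> \<bar>A $$ (i,j)\<bar> \<le> 1"
  shows "\<bar>Determinant.det A\<bar> \<le> fact n"
proof -
  let ?P = "{p. p permutes {0..<n}}"
  have "\<bar>Determinant.det A\<bar> \<le> (\<Sum>p\<in>?P. \<bar>signof p * (\<Prod>i=0..<n. A $$ (i, p i))\<bar>)"
    unfolding det_def'[OF A] by (rule sum_abs)
  also have "\<dots> \<le> (\<Sum>p\<in>?P. 1)"
  proof (rule sum_mono)
    fix p assume p: "p \<in> ?P"
    have "\<bar>(\<Prod>i=0..<n. A $$ (i, p i))\<bar> = (\<Prod>i=0..<n. \<bar>A $$ (i, p i)\<bar>)" by (rule abs_prod)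
    also have "\<dots> \<le> 1"
      using p by (intro prod_le_1) (auto intro!: b simp: permutes_in_image)
    finally have "\<bar>(\<Prod>i=0..<n. A $$ (i, p i))\<bar> \<le> 1" .
    moreover have "\<bar>(signof p :: real)\<bar> = 1" by (cases rule: sign_cases[of p]) auto
    ultimately show "\<bar>signof p * (\<Prod>i=0..<n. A $$ (i, p i))\<bar> \<le> 1" by (simp add: abs_mult)
  qed
  also have "\<dots> = fact n" using card_permutations[of "{0..<n}" n] by simp
  finally show ?thesis .
qed

lemma Dt_tpow:
  fixes E :: "'a::euclidean_space \<Rightarrow> 'a"
  assumes lin: "linear E" and s: "s > 0"
  shows "Determinant.det (matr (tpow s E)) = s powr trace_op E"
proof -
  have "tpow s E = ue E (ln s)" by (rule ext) (simp add: tpow_ue)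
  then have "Determinant.det (matr (tpow s E)) = Dt E (ln s)" by (simp add: Dt_def)
  also have "\<dots> = exp (trace_op E * ln s)" by (rule Dt_exp[OF lin])
  also have "\<dots> = s powr trace_op E" using s by (simp add: powr_def mult.commute)
  finally show ?thesis .
qed

lemma entry_bound_from_adj:
  fixes A N :: "real mat"
  assumes A: "A \<in> carrier_mat n n" and N: "N \<in> carrier_mat n n" and NA: "N * A = 1\<^sub>m n"
    and Nb: "\<And>i j. i < n \<Longrightarrow> j < n \<Longrightarrow> \<bar>N $$ (i,j)\<bar> \<le> 1"
    and i: "i < n" and j: "j < n"
  shows "\<bar>A $$ (i,j)\<bar> \<le> \<bar>Determinant.det A\<bar> * fact n"
proof -
  have adjN: "adj_mat N \<in> carrier_mat n n" using adj_mat(1)[OF N] .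
  have "adj_mat N = adj_mat N * (N * A)" using adjN by (simp add: NA)
  also have "\<dots> = (adj_mat N * N) * A" using adjN N A by simp
  also have "\<dots> = (Determinant.det N \<cdot>\<^sub>m 1\<^sub>m n) * A" using adj_mat(3)[OF N] by simp
  also have "\<dots> = Determinant.det N \<cdot>\<^sub>m A" using A by (simp add: mult_smult_assoc_mat[OF one_carrier_mat A])
  finally have adjeq: "adj_mat N = Determinant.det N \<cdot>\<^sub>m A" .
  have dd: "Determinant.det N * Determinant.det A = 1"
    using det_mult[OF N A] NA by simp
  have "adj_mat N $$ (i,j) = Determinant.det N * A $$ (i,j)" using adjeq A i j by simp
  then have Aij: "A $$ (i,j) = Determinant.det A * adj_mat N $$ (i,j)"
    using dd by (metis mult.assoc mult.commute mult_1)
  have "adj_mat N $$ (i,j) = cofactor N j i" using N i j by (simp add: adj_mat_def)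
  then have "\<bar>adj_mat N $$ (i,j)\<bar> = \<bar>Determinant.det (mat_delete N j i)\<bar>"
    by (simp add: cofactor_def abs_mult)
  also have "\<dots> \<le> fact (n - 1)"
  proof (rule det_bound)
    show "mat_delete N j i \<in> carrier_mat (n - 1) (n - 1)" using mat_delete_carrier[OF N] .
    fix a b assume "a < n - 1" "b < n - 1"
    then show "\<bar>mat_delete N j i $$ (a, b)\<bar> \<le> 1" using N
      by (simp add: mat_delete_def Nb)
  qed
  also have "\<dots> \<le> fact n" by (rule fact_mono) simp
  finally have "\<bar>adj_mat N $$ (i,j)\<bar> \<le> fact n" .
  then show ?thesis unfolding Aij abs_mult by (intro mult_left_mono) auto
qed

lemma growth:
  fixes P :: "'a::euclidean_space \<Rightarrow> real" and E :: "'a \<Rightarrow> 'a"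
  assumes P_cont: "continuous_on UNIV P" and P_pos: "\<And>x. P x = 0 \<longleftrightarrow> x = 0"
    and P_nn: "\<And>x. P x \<ge> 0" and lin: "linear E"
    and hom: "\<And>t \<xi>. t > 0 \<Longrightarrow> P (tpow t E \<xi>) = t * P \<xi>"
  shows "\<exists>C>0. \<exists>s1\<ge>1. \<forall>s x. s \<ge> s1 \<longrightarrow> norm (tpow s E x) \<le> C * s powr (trace_op E) * norm x"
proof -
  let ?n = "DIM('a)"
  obtain t0 where t0: "t0 > 0" "t0 \<le> 1" "\<And>t x. 0 < t \<Longrightarrow> t \<le> t0 \<Longrightarrow> norm x \<le> 1 \<Longrightarrow> norm (tpow t E x) \<le> 1"
    using lyap_decay[OF assms, of 1] by auto
  define C where "C = real ?n * real ?n * fact ?n"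
  have C: "C > 0" by (simp add: C_def)
  have main: "\<forall>s x. 1 / t0 \<le> s \<longrightarrow> norm (tpow s E x) \<le> C * s powr (trace_op E) * norm x"
  proof (intro allI impI)
    fix s :: real and x :: 'a assume s: "1 / t0 \<le> s"
    have spos: "s > 0" using s t0 by (smt (verit) divide_pos_pos)
    have tt: "1 / s \<le> t0" using s t0 spos by (simp add: field_simps)
    define A where "A = matr (tpow s E)"
    define N where "N = matr (tpow (1 / s) E)"
    have Ac: "A \<in> carrier_mat ?n ?n" and Nc: "N \<in> carrier_mat ?n ?n" by (simp_all add: A_def N_def matr_carrier)
    have "N * A = matr (\<lambda>x. tpow (1 / s) E (tpow s E x))"
      unfolding A_def N_def by (rule matr_comp[OF tpow_linear[OF lin], symmetric])
    also have "(\<lambda>x. tpow (1 / s) E (tpow s E x)) = (\<lambda>x. x)"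
      using spos by (simp add: tpow_mult[OF lin] tpow_one)
    finally have NA: "N * A = 1\<^sub>m ?n" by (simp add: matr_id)
    have Nb: "\<bar>N $$ (i,j)\<bar> \<le> 1" if "i < ?n" "j < ?n" for i j
    proof -
      have "\<bar>N $$ (i,j)\<bar> = \<bar>inner (tpow (1/s) E (bl ! j)) (bl ! i)\<bar>" using that by (simp add: N_def matr_index)
      also have "\<dots> \<le> norm (tpow (1/s) E (bl ! j)) * norm (bl ! i :: 'a)" by (rule Cauchy_Schwarz_ineq2)
      also have "\<dots> \<le> 1 * 1"
        using t0(3)[of "1/s" "bl ! j"] spos tt bl_nth[where 'a='a, OF that(1)] bl_nth[where 'a='a, OF that(2)]
        by (intro mult_mono) auto
      finally show ?thesis by simp
    qed
    have detA: "Determinant.det A = s powr trace_op E" unfolding A_def by (rule Dt_tpow[OF lin spos])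
    have Ab: "\<bar>A $$ (i,j)\<bar> \<le> s powr trace_op E * fact ?n" if "i < ?n" "j < ?n" for i j
      using entry_bound_from_adj[OF Ac Nc NA Nb that] detA by simp
    have comp: "\<bar>inner (tpow s E x) (bl ! i)\<bar> \<le> real ?n * (s powr trace_op E * fact ?n) * norm x" if i: "i < ?n" for i
    proof -
      have "tpow s E x = (\<Sum>k<?n. inner x (bl ! k) *\<^sub>R tpow s E (bl ! k))"
        by (subst basis_expand[of x]) (simp add: linear_sum[OF tpow_linear[OF lin]] linear_cmul[OF tpow_linear[OF lin]])
      then have "inner (tpow s E x) (bl ! i) = (\<Sum>k<?n. inner x (bl ! k) * A $$ (i, k))"
        using i by (simp add: inner_sum_left A_def matr_index)
      then have "\<bar>inner (tpow s E x) (bl ! i)\<bar> \<le> (\<Sum>k<?n. \<bar>inner x (bl ! k)\<bar> * \<bar>A $$ (i, k)\<bar>)"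
        by (simp add: abs_mult[symmetric] sum_abs)
      also have "\<dots> \<le> (\<Sum>k<?n. norm x * (s powr trace_op E * fact ?n))"
      proof (rule sum_mono)
        fix k assume k: "k \<in> {..<?n}"
        have "\<bar>inner x (bl ! k)\<bar> \<le> norm x"
          using Basis_le_norm bl_nth[where 'a='a] k by auto
        then show "\<bar>inner x (bl ! k)\<bar> * \<bar>A $$ (i, k)\<bar> \<le> norm x * (s powr trace_op E * fact ?n)"
          using Ab[OF i] k by (intro mult_mono) auto
      qed
      also have "\<dots> = real ?n * (s powr trace_op E * fact ?n) * norm x" by simp
      finally show ?thesis .
    qed
    have "norm (tpow s E x) \<le> (\<Sum>b\<in>Basis. \<bar>inner (tpow s E x) b\<bar>)" by (rule norm_le_l1)
    also have "\<dots> = (\<Sum>i<?n. \<bar>inner (tpow s E x) (bl ! i)\<bar>)" by (rule sum_Basis_bl)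
    also have "\<dots> \<le> (\<Sum>i<?n. real ?n * (s powr trace_op E * fact ?n) * norm x)"
      by (rule sum_mono) (use comp in auto)
    also have "\<dots> = C * s powr trace_op E * norm x" by (simp add: C_def)
    finally show "norm (tpow s E x) \<le> C * s powr trace_op E * norm x" .
  qed
  have "1 \<le> 1 / t0" using t0 by simp
  then show ?thesis using C main by blast
qed

lemma trace_pos:
  fixes P :: "'a::euclidean_space \<Rightarrow> real" and E :: "'a \<Rightarrow> 'a"
  assumes P_cont: "continuous_on UNIV P" and P_pos: "\<And>x. P x = 0 \<longleftrightarrow> x = 0"
    and P_nn: "\<And>x. P x \<ge> 0" and lin: "linear E"
    and hom: "\<And>t \<xi>. t > 0 \<Longrightarrow> P (tpow t E \<xi>) = t * P \<xi>"
  shows "trace_op E > 0"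
proof (rule ccontr)
  assume neg: "\<not> trace_op E > 0"
  obtain C s1 where C: "C > 0" "s1 \<ge> 1" "\<And>s x. s \<ge> s1 \<Longrightarrow> norm (tpow s E x) \<le> C * s powr (trace_op E) * norm x"
    using growth[OF assms] by blast
  obtain t0 where t0: "t0 > 0" "t0 \<le> 1" "\<And>t x. 0 < t \<Longrightarrow> t \<le> t0 \<Longrightarrow> norm x \<le> 1 \<Longrightarrow> norm (tpow t E x) \<le> 1 / (2 * C)"
    using lyap_decay[OF assms, of "1 / (2 * C)"] C by auto
  define s where "s = max s1 (1 / t0)"
  have s1: "s \<ge> 1" "s \<ge> s1" "s \<ge> 1 / t0" using C by (auto simp: s_def)
  then have spos: "s > 0" by simp
  have tt: "1 / s \<le> t0" using s1 t0 spos by (simp add: field_simps)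
  obtain b :: 'a where b: "b \<in> Basis" using nonempty_Basis by blast
  have "b = tpow s E (tpow (1 / s) E b)" using spos by (simp add: tpow_mult[OF lin] tpow_one)
  then have "norm b \<le> C * s powr (trace_op E) * norm (tpow (1 / s) E b)" using C(3)[OF s1(2)] by metis
  also have "\<dots> \<le> C * s powr (trace_op E) * (1 / (2 * C))"
    using t0(3)[of "1/s" b] spos tt b C by (intro mult_left_mono) auto
  also have "\<dots> = s powr (trace_op E) / 2" using C by simp
  also have "\<dots> \<le> 1 / 2"
  proof -
    have "s powr (trace_op E) \<le> s powr 0" using neg s1 by (intro powr_mono) auto
    then show ?thesis using spos by simp
  qed
  finally show False using b by simp
qed


lemma g_deriv:
  fixes Qt :: "'a::euclidean_space \<Rightarrow> real" and E :: "'a \<Rightarrow> 'a"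
    and qa :: "'a \<Rightarrow> ('a \<Rightarrow>\<^sub>L real)" and qb :: "'a \<Rightarrow> ('a \<Rightarrow>\<^sub>L ('a \<Rightarrow>\<^sub>L real))"
  assumes lin: "linear E"
    and d1: "(Qt has_derivative blinfun_apply (qa (tpow t E \<xi>))) (at (tpow t E \<xi>))"
    and d2: "(qa has_derivative blinfun_apply (qb (tpow t E \<xi>))) (at (tpow t E \<xi>))"
    and t: "t > 0"
  shows "((\<lambda>s. Qt (tpow s E \<xi>)) has_real_derivative
            blinfun_apply (qa (tpow t E \<xi>)) ((1/t) *\<^sub>R E (tpow t E \<xi>))) (at t)"
    and "(\<lambda>s. blinfun_apply (qa (tpow s E \<xi>)) ((1/s) *\<^sub>R E (tpow s E \<xi>))) differentiable (at t)"
proof -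
  let ?X = "\<lambda>s. tpow s E \<xi>"
  have dX: "(?X has_derivative (\<lambda>h. h *\<^sub>R ((1/t) *\<^sub>R E (?X t)))) (at t)"
    using tpow_deriv[OF lin t] by (simp add: has_vector_derivative_def)
  have "((\<lambda>s. Qt (?X s)) has_derivative (\<lambda>h. blinfun_apply (qa (?X t)) (h *\<^sub>R ((1/t) *\<^sub>R E (?X t))))) (at t)"
    using diff_chain_at[OF dX d1] by (simp add: o_def)
  then show "((\<lambda>s. Qt (tpow s E \<xi>)) has_real_derivative
            blinfun_apply (qa (tpow t E \<xi>)) ((1/t) *\<^sub>R E (tpow t E \<xi>))) (at t)"
    unfolding has_field_derivative_def
    by (rule has_derivative_eq_rhs) (auto simp: fun_eq_iff o_def blinfun.scaleR_right mult.commute)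
  have dq: "((qa \<circ> ?X) has_derivative (blinfun_apply (qb (?X t)) \<circ> (\<lambda>h. h *\<^sub>R ((1/t) *\<^sub>R E (?X t))))) (at t)"
    by (rule diff_chain_at[OF dX d2])
  have bl: "bounded_linear E" using lin by (simp add: linear_conv_bounded_linear)
  have dE: "(\<lambda>s. E (?X s)) differentiable (at t)"
    by (rule differentiableI_vector[OF bounded_linear.has_vector_derivative[OF bl tpow_deriv[OF lin t]]])
  have dI: "(\<lambda>s. 1 / s) differentiable (at t)"
    using t by (auto intro!: derivative_intros)
  have "(\<lambda>s. (1/s) *\<^sub>R E (?X s)) differentiable (at t)"
    by (rule differentiable_scaleR[OF dI dE])
  then obtain W where W: "((\<lambda>s. (1/s) *\<^sub>R E (?X s)) has_derivative W) (at t)"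
    unfolding differentiable_def by blast
  note bounded_bilinear.FDERIV[OF bounded_bilinear_blinfun_apply dq W]
  then show "(\<lambda>s. blinfun_apply (qa (tpow s E \<xi>)) ((1/s) *\<^sub>R E (tpow s E \<xi>))) differentiable (at t)"
    unfolding differentiable_def o_def by blast
qed

lemma g_local:
  fixes Qt :: "'a::euclidean_space \<Rightarrow> real" and E :: "'a \<Rightarrow> 'a"
    and qa :: "'a \<Rightarrow> ('a \<Rightarrow>\<^sub>L real)" and qb :: "'a \<Rightarrow> ('a \<Rightarrow>\<^sub>L ('a \<Rightarrow>\<^sub>L real))"
  assumes lin: "linear E"
    and inU: "\<And>t. 0 < t \<Longrightarrow> t < T \<Longrightarrow> tpow t E \<eta> \<in> U"
    and d1: "\<And>x. x \<in> U \<Longrightarrow> (Qt has_derivative blinfun_apply (qa x)) (at x)"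
    and d2: "\<And>x. x \<in> U \<Longrightarrow> (qa has_derivative blinfun_apply (qb x)) (at x)"
    and t: "0 < t" "t < T"
  defines "G1 \<equiv> (\<lambda>s. blinfun_apply (qa (tpow s E \<eta>)) ((1/s) *\<^sub>R E (tpow s E \<eta>)))"
  shows "((\<lambda>s. Qt (tpow s E \<eta>)) has_real_derivative G1 t) (at t)"
    and "deriv (\<lambda>s. Qt (tpow s E \<eta>)) t = G1 t"
    and "(G1 has_real_derivative deriv G1 t) (at t)"
    and "deriv (deriv (\<lambda>s. Qt (tpow s E \<eta>))) t = deriv G1 t"
proof -
  have D: "((\<lambda>s. Qt (tpow s E \<eta>)) has_real_derivative G1 x) (at x)"
      "G1 differentiable (at x)" if "0 < x" "x < T" for x
    using g_deriv[where t=x and \<xi>=\<eta> and Qt=Qt and qa=qa and qb=qb, OF lin d1[OF inU[OF that]] d2[OF inU[OF that]] that(1)]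
    by (simp_all add: G1_def)
  show "((\<lambda>s. Qt (tpow s E \<eta>)) has_real_derivative G1 t) (at t)" by (rule D(1)[OF t])
  show "deriv (\<lambda>s. Qt (tpow s E \<eta>)) t = G1 t" by (rule DERIV_imp_deriv[OF D(1)[OF t]])
  show "(G1 has_real_derivative deriv G1 t) (at t)"
    using D(2)[OF t] by (simp add: DERIV_deriv_iff_real_differentiable)
  have ev: "eventually (\<lambda>x. x \<in> {0<..<T}) (nhds t)"
    by (rule eventually_nhds_in_open) (use t in auto)
  show "deriv (deriv (\<lambda>s. Qt (tpow s E \<eta>))) t = deriv G1 t"
    by (rule deriv_cong_ev[OF eventually_mono[OF ev] refl]) (auto intro: DERIV_imp_deriv D(1))
qed

lemma Phi_derivs:
  fixes E :: "'a::euclidean_space \<Rightarrow> 'a" and g GG :: "real \<Rightarrow> real" and y \<eta> :: 'a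
    and n \<sigma> T s :: real
  assumes lin: "linear E" and n: "n \<ge> 1"
    and dg: "\<And>t. 0 < t \<Longrightarrow> t < T \<Longrightarrow> (g has_real_derivative GG t) (at t)"
    and dG: "\<And>t. 0 < t \<Longrightarrow> t < T \<Longrightarrow> (GG has_real_derivative deriv GG t) (at t)"
    and s: "0 < s" "s < n * T"
  defines "h1 \<equiv> (\<lambda>s. inner y ((1/s) *\<^sub>R E (tpow s E \<eta>)))"
    and "h2 \<equiv> (\<lambda>s. (inner y (E (E (tpow s E \<eta>))) - inner y (E (tpow s E \<eta>))) / s^2)"
  shows "((\<lambda>s. \<sigma> * s + n * g (s / n) + inner y (tpow s E \<eta>)) has_real_derivative
            \<sigma> + GG (s / n) + h1 s) (at s)"
    and "((\<lambda>s. \<sigma> + GG (s / n) + h1 s) has_real_derivative deriv GG (s / n) / n + h2 s) (at s)"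
proof -
  have npos: "n > 0" using n by simp
  have sn: "0 < s / n" "s / n < T" using s npos by (simp_all add: field_simps)
  have bl: "bounded_linear E" using lin by (simp add: linear_conv_bounded_linear)
  have dX: "((\<lambda>s. tpow s E \<eta>) has_vector_derivative (1/s) *\<^sub>R E (tpow s E \<eta>)) (at s)"
    by (rule tpow_deriv[OF lin s(1)])
  have dh: "((\<lambda>s. inner y (tpow s E \<eta>)) has_real_derivative h1 s) (at s)"
    using bounded_linear.has_vector_derivative[OF bounded_linear_inner_right dX, of y]
    by (simp add: h1_def has_real_derivative_iff_has_vector_derivative)
  have ln: "((\<lambda>s. s / n) has_real_derivative 1 / n) (at s)" using npos
    by (auto intro!: derivative_eq_intros)
  have dgs: "((\<lambda>s. g (s / n)) has_real_derivative GG (s / n) * (1 / n)) (at s)"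
    using DERIV_chain2[where f=g and g="\<lambda>s. s / n", OF _ ln] dg[OF sn] by simp
  have "((\<lambda>s. \<sigma> * s + n * g (s / n) + inner y (tpow s E \<eta>)) has_real_derivative
            \<sigma> * 1 + n * (GG (s / n) * (1 / n)) + h1 s) (at s)"
    by (rule DERIV_add[OF DERIV_add[OF DERIV_cmult[OF DERIV_ident] DERIV_cmult[OF dgs]] dh])
  then show "((\<lambda>s. \<sigma> * s + n * g (s / n) + inner y (tpow s E \<eta>)) has_real_derivative
            \<sigma> + GG (s / n) + h1 s) (at s)" using npos by simp
  have dGs: "((\<lambda>s. GG (s / n)) has_real_derivative deriv GG (s / n) * (1 / n)) (at s)"
    using DERIV_chain2[where f=GG and g="\<lambda>s. s / n", OF _ ln] dG[OF sn] by simp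
  have dEX: "((\<lambda>s. E (tpow s E \<eta>)) has_vector_derivative E ((1/s) *\<^sub>R E (tpow s E \<eta>))) (at s)"
    by (rule bounded_linear.has_vector_derivative[OF bl dX])
  have dIE: "((\<lambda>s. inner y (E (tpow s E \<eta>))) has_real_derivative inner y (E ((1/s) *\<^sub>R E (tpow s E \<eta>)))) (at s)"
    using bounded_linear.has_vector_derivative[OF bounded_linear_inner_right dEX, of y]
    by (simp add: has_real_derivative_iff_has_vector_derivative)
  have h1eq: "h1 = (\<lambda>s. (1 / s) * inner y (E (tpow s E \<eta>)))" by (simp add: h1_def fun_eq_iff)
  have dh1: "(h1 has_real_derivative (- 1 / s^2) * inner y (E (tpow s E \<eta>)) + (1 / s) * inner y (E ((1/s) *\<^sub>R E (tpow s E \<eta>)))) (at s)"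
    unfolding h1eq using s(1) by (auto intro!: derivative_eq_intros dIE simp: power2_eq_square field_simps)
  have "(- 1 / s^2) * inner y (E (tpow s E \<eta>)) + (1 / s) * inner y (E ((1/s) *\<^sub>R E (tpow s E \<eta>))) = h2 s"
    using s(1) by (simp add: h2_def linear_cmul[OF lin] power2_eq_square field_simps)
  with dh1 have dh1': "(h1 has_real_derivative h2 s) (at s)" by simp
  have "((\<lambda>s. \<sigma> + GG (s / n) + h1 s) has_real_derivative 0 + deriv GG (s / n) * (1 / n) + h2 s) (at s)"
    by (rule DERIV_add[OF DERIV_add[OF DERIV_const dGs] dh1'])
  then show "((\<lambda>s. \<sigma> + GG (s / n) + h1 s) has_real_derivative deriv GG (s / n) / n + h2 s) (at s)" by simp
qed

lemma powr_inv_powr: "0 < \<mu> \<Longrightarrow> 0 \<le> x \<Longrightarrow> (x powr \<mu>) powr (1 / \<mu>) = (x :: real)"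
  by (cases "x = 0") (simp_all add: powr_powr)

lemma core:
  fixes Q Qt :: "'a::euclidean_space \<Rightarrow> real" and E :: "'a \<Rightarrow> 'a" and U :: "'a set"
    and qa :: "'a \<Rightarrow> ('a \<Rightarrow>\<^sub>L real)" and qb :: "'a \<Rightarrow> ('a \<Rightarrow>\<^sub>L ('a \<Rightarrow>\<^sub>L real))"
    and \<eta> y :: 'a and n \<mu> \<delta> sz \<theta>0 :: real
  assumes lin: "linear E"
    and mu: "0 < \<mu>" "\<mu> < 1"
    and hom: "\<And>t. t > 0 \<Longrightarrow> Q (tpow t E \<eta>) = t * Q \<eta>"
    and sig: "\<bar>Q \<eta>\<bar> = 1"
    and n: "n \<ge> 1"
    and dl: "\<delta> > 0"
    and inU: "\<And>t. 0 < t \<Longrightarrow> t < 2 * \<delta> \<Longrightarrow> tpow t E \<eta> \<in> U"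
    and d1: "\<And>x. x \<in> U \<Longrightarrow> (Qt has_derivative blinfun_apply (qa x)) (at x)"
    and d2: "\<And>x. x \<in> U \<Longrightarrow> (qa has_derivative blinfun_apply (qb x)) (at x)"
    and sub1: "\<And>t. 0 < t \<Longrightarrow> t < 2 * \<delta> \<Longrightarrow> \<bar>t * deriv (\<lambda>s. Qt (tpow s E \<eta>)) t\<bar> \<le> (1 - \<mu>) / 8 * t"
    and sub2: "\<And>t. 0 < t \<Longrightarrow> t < 2 * \<delta> \<Longrightarrow> \<bar>t ^ 2 * deriv (deriv (\<lambda>s. Qt (tpow s E \<eta>))) t\<bar> \<le> (1 - \<mu>) / 8 * t"
    and hb1: "\<And>s. s \<ge> sz \<Longrightarrow> \<bar>inner y ((1/s) *\<^sub>R E (tpow s E \<eta>))\<bar> \<le> (1 - \<mu>) / 8"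
    and hb2: "\<And>s. s \<ge> sz \<Longrightarrow> s * \<bar>(inner y (E (E (tpow s E \<eta>))) - inner y (E (tpow s E \<eta>))) / s^2\<bar> \<le> (1 - \<mu>) / 8"
    and sz: "sz > 0"
    and th0: "\<theta>0 \<ge> 1" "sz powr \<mu> \<le> \<theta>0"
  shows "(let f = (\<lambda>\<theta>. Q (tpow \<theta> (\<lambda>x. (1 / \<mu>) *\<^sub>R E x) \<eta>)
                   + n * Qt (tpow n (\<lambda>x. - E x) (tpow \<theta> (\<lambda>x. (1 / \<mu>) *\<^sub>R E x) \<eta>))
                   + inner y (tpow \<theta> (\<lambda>x. (1 / \<mu>) *\<^sub>R E x) \<eta>));
             I = {\<theta>0 .. (n * \<delta>) powr \<mu>}
         in (\<forall>\<theta>\<in>I. tpow n (\<lambda>x. - E x) (tpow \<theta> (\<lambda>x. (1 / \<mu>) *\<^sub>R E x) \<eta>) \<in> U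
                     \<and> f differentiable (at \<theta>))
          \<and> (mono_on I (deriv f) \<or> monotone_on I (\<le>) (\<ge>) (deriv f))
          \<and> (\<forall>\<theta>\<in>I. \<bar>deriv f \<theta>\<bar> \<ge> (1 / (2 * \<mu>)) * \<theta> powr (1 / \<mu> - 1)))"
proof -
  define F where "F = (\<lambda>x. (1 / \<mu>) *\<^sub>R E x)"
  define f where "f = (\<lambda>\<theta>. Q (tpow \<theta> F \<eta>) + n * Qt (tpow n (\<lambda>x. - E x) (tpow \<theta> F \<eta>))
                   + inner y (tpow \<theta> F \<eta>))"
  define I where "I = {\<theta>0 .. (n * \<delta>) powr \<mu>}"
  define \<sigma> where "\<sigma> = Q \<eta>"
  define X where "X s = tpow s E \<eta>" for s
  define g where "g s = Qt (X s)" for s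
  define G1 where "G1 = (\<lambda>s. blinfun_apply (qa (tpow s E \<eta>)) ((1/s) *\<^sub>R E (tpow s E \<eta>)))"
  define h1 where "h1 = (\<lambda>s. inner y ((1/s) *\<^sub>R E (tpow s E \<eta>)))"
  define h2 where "h2 = (\<lambda>s. (inner y (E (E (tpow s E \<eta>))) - inner y (E (tpow s E \<eta>))) / s^2)"
  define \<Phi> where "\<Phi> s = \<sigma> * s + n * g (s / n) + inner y (tpow s E \<eta>)" for s
  define \<Phi>1 where "\<Phi>1 s = \<sigma> + G1 (s / n) + h1 s" for s
  define \<Phi>2 where "\<Phi>2 s = deriv G1 (s / n) / n + h2 s" for s
  define \<Psi> where "\<Psi> s = s powr (1 - \<mu>) * \<Phi>1 s" for s
  define \<Psi>' where "\<Psi>' s = (1 - \<mu>) * s powr (- \<mu>) * \<Phi>1 s + s powr (1 - \<mu>) * \<Phi>2 s" for s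
  define \<phi> where "\<phi> \<theta> = \<theta> powr (1 / \<mu>)" for \<theta>
  let ?T = "2 * \<delta>"
  have npos: "n > 0" using n by simp
  have sig': "\<sigma> = 1 \<or> \<sigma> = -1" using sig by (auto simp: \<sigma>_def abs_if split: if_splits)
  have eps: "(1 - \<mu>) / 8 \<le> 1 / 8" "(1 - \<mu>) / 8 > 0" using mu by auto
  have gl1: "((\<lambda>s. Qt (tpow s E \<eta>)) has_real_derivative G1 t) (at t)" if "0 < t" "t < 2 * \<delta>" for t
    unfolding G1_def by (rule g_local(1)[of E "2 * \<delta>" \<eta> U Qt qa qb t, OF lin inU d1 d2 that])
  have gl2: "deriv (\<lambda>s. Qt (tpow s E \<eta>)) t = G1 t" if "0 < t" "t < 2 * \<delta>" for t
    unfolding G1_def by (rule g_local(2)[of E "2 * \<delta>" \<eta> U Qt qa qb t, OF lin inU d1 d2 that])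
  have gl3: "(G1 has_real_derivative deriv G1 t) (at t)" if "0 < t" "t < 2 * \<delta>" for t
    unfolding G1_def by (rule g_local(3)[of E "2 * \<delta>" \<eta> U Qt qa qb t, OF lin inU d1 d2 that])
  have gl4: "deriv (deriv (\<lambda>s. Qt (tpow s E \<eta>))) t = deriv G1 t" if "0 < t" "t < 2 * \<delta>" for t
    unfolding G1_def by (rule g_local(4)[of E "2 * \<delta>" \<eta> U Qt qa qb t, OF lin inU d1 d2 that])
  have G1b: "\<bar>G1 t\<bar> \<le> (1 - \<mu>) / 8" if "0 < t" "t < ?T" for t
  proof -
    have "\<bar>t * G1 t\<bar> \<le> (1 - \<mu>) / 8 * t" using sub1[OF that] gl2[OF that] by simp
    then have "t * \<bar>G1 t\<bar> \<le> t * ((1 - \<mu>) / 8)" using that by (simp add: abs_mult mult.commute)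
    then show ?thesis using that by simp
  qed
  have G2b: "t * \<bar>deriv G1 t\<bar> \<le> (1 - \<mu>) / 8" if "0 < t" "t < ?T" for t
  proof -
    have "\<bar>t ^ 2 * deriv G1 t\<bar> \<le> (1 - \<mu>) / 8 * t" using sub2[OF that] gl4[OF that] by simp
    then have "t * (t * \<bar>deriv G1 t\<bar>) \<le> t * ((1 - \<mu>) / 8)"
      using that by (simp add: abs_mult power2_eq_square mult.commute mult.left_commute)
    then show ?thesis using that by simp
  qed
  have dg: "(g has_real_derivative G1 t) (at t)" if "0 < t" "t < ?T" for t
    using gl1[OF that] by (simp add: g_def[abs_def] X_def)
  have dG: "(G1 has_real_derivative deriv G1 t) (at t)" if "0 < t" "t < ?T" for t
    by (rule gl3[OF that])
  have dPhi: "(\<Phi> has_real_derivative \<Phi>1 s) (at s)" if "0 < s" "s < n * ?T" for s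
  proof -
    have "((\<lambda>s. \<sigma> * s + n * g (s / n) + inner y (tpow s E \<eta>)) has_real_derivative
            \<sigma> + G1 (s / n) + inner y ((1/s) *\<^sub>R E (tpow s E \<eta>))) (at s)"
      apply (rule Phi_derivs(1)[where E=E and n=n and T="2 * \<delta>" and g=g and GG=G1 and y=y and \<eta>=\<eta> and \<sigma>=\<sigma> and s=s])
           apply (rule lin)
          apply (rule n)
         apply (erule (1) dg)
        apply (erule (1) dG)
       apply (rule that(1))
      apply (rule that(2))
      done
    then show ?thesis unfolding \<Phi>_def[abs_def] \<Phi>1_def h1_def .
  qed
  have dPhi1: "(\<Phi>1 has_real_derivative \<Phi>2 s) (at s)" if "0 < s" "s < n * ?T" for s
  proof -
    have "((\<lambda>s. \<sigma> + G1 (s / n) + inner y ((1/s) *\<^sub>R E (tpow s E \<eta>))) has_real_derivative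
            deriv G1 (s / n) / n + (inner y (E (E (tpow s E \<eta>))) - inner y (E (tpow s E \<eta>))) / s^2) (at s)"
      apply (rule Phi_derivs(2)[where E=E and n=n and T="2 * \<delta>" and g=g and GG=G1 and y=y and \<eta>=\<eta> and \<sigma>=\<sigma> and s=s])
           apply (rule lin)
          apply (rule n)
         apply (erule (1) dg)
        apply (erule (1) dG)
       apply (rule that(1))
      apply (rule that(2))
      done
    then show ?thesis unfolding \<Phi>1_def[abs_def] \<Phi>2_def h1_def h2_def .
  qed
  have dPsi: "(\<Psi> has_real_derivative \<Psi>' s) (at s)" if "0 < s" "s < n * ?T" for s
  proof -
    have "((\<lambda>s. s powr (1 - \<mu>)) has_real_derivative (1 - \<mu>) * s powr (1 - \<mu> - 1)) (at s)"
      by (rule has_real_derivative_powr) (use that in simp)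
    from DERIV_mult[OF this dPhi1[OF that]]
    show ?thesis by (simp add: \<Psi>_def[abs_def] \<Psi>'_def algebra_simps)
  qed
  have tF: "tpow \<theta> F \<eta> = X (\<phi> \<theta>)" if "\<theta> > 0" for \<theta>
    using tpow_scale[OF lin that] by (simp add: F_def X_def \<phi>_def)
  have tn: "tpow n (\<lambda>x. - E x) z = tpow (1 / n) E z" for z
  proof -
    have "(\<lambda>x. - E x) = (\<lambda>x. (-1) *\<^sub>R E x)" by simp
    then have "tpow n (\<lambda>x. - E x) z = tpow (n powr -1) E z" using tpow_scale[OF lin npos, of "-1"] by simp
    then show ?thesis using npos by (simp add: powr_neg_one)
  qed
  have tnX: "tpow n (\<lambda>x. - E x) (X s) = X (s / n)" if "s > 0" for s
    using tpow_mult[OF lin, of "1 / n" s \<eta>] that npos by (simp add: tn X_def)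
  have phipos: "\<phi> \<theta> > 0" if "\<theta> > 0" for \<theta> using that by (simp add: \<phi>_def)
  have frep: "f \<theta> = \<Phi> (\<phi> \<theta>)" if "\<theta> > 0" for \<theta>
    using that phipos[OF that] hom[OF phipos[OF that]] tnX[OF phipos[OF that], unfolded X_def]
    by (simp add: f_def \<Phi>_def tF X_def g_def \<sigma>_def mult.commute)
  have dphi: "(\<phi> has_real_derivative (1 / \<mu>) * \<theta> powr (1 / \<mu> - 1)) (at \<theta>)" if "\<theta> > 0" for \<theta>
    unfolding \<phi>_def[abs_def] by (rule has_real_derivative_powr[OF that])
  have pw: "\<theta> powr (1 / \<mu> - 1) = (\<phi> \<theta>) powr (1 - \<mu>)" if "\<theta> > 0" for \<theta>
  proof -
    have e: "(1 / \<mu>) * (1 - \<mu>) = 1 / \<mu> - 1" using mu by (simp add: field_simps)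
    show ?thesis by (simp only: \<phi>_def powr_powr e)
  qed
  have df: "(f has_real_derivative (1 / \<mu>) * \<Psi> (\<phi> \<theta>)) (at \<theta>)"
    if "\<theta> > 0" "\<phi> \<theta> < n * ?T" for \<theta>
  proof -
    have "((\<lambda>\<theta>. \<Phi> (\<phi> \<theta>)) has_real_derivative \<Phi>1 (\<phi> \<theta>) * ((1 / \<mu>) * \<theta> powr (1 / \<mu> - 1))) (at \<theta>)"
      by (rule DERIV_chain2[OF dPhi[OF phipos[OF that(1)] that(2)] dphi[OF that(1)]])
    then have "((\<lambda>\<theta>. \<Phi> (\<phi> \<theta>)) has_real_derivative (1 / \<mu>) * \<Psi> (\<phi> \<theta>)) (at \<theta>)"
      using pw[OF that(1)] by (simp add: \<Psi>_def mult_ac)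
    then show ?thesis
      by (rule has_field_derivative_transform_within_open[where S="{0<..}"]) (use that frep in auto)
  qed
  have rng: "\<theta> > 0 \<and> sz \<le> \<phi> \<theta> \<and> \<phi> \<theta> \<le> n * \<delta>" if "\<theta> \<in> I" for \<theta>
  proof -
    have th: "\<theta>0 \<le> \<theta>" "\<theta> \<le> (n * \<delta>) powr \<mu>" using that by (auto simp: I_def)
    have tpos: "\<theta> > 0" using th th0 by simp
    have "sz = (sz powr \<mu>) powr (1 / \<mu>)" using powr_inv_powr[OF mu(1), of sz] sz by simp
    also have "\<dots> \<le> \<theta> powr (1 / \<mu>)" using th th0 mu by (intro powr_mono2) auto
    finally have a: "sz \<le> \<phi> \<theta>" by (simp add: \<phi>_def)
    have "\<phi> \<theta> \<le> ((n * \<delta>) powr \<mu>) powr (1 / \<mu>)" unfolding \<phi>_def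
      using th tpos mu by (intro powr_mono2) auto
    also have "\<dots> = n * \<delta>" using powr_inv_powr[OF mu(1), of "n * \<delta>"] npos dl by simp
    finally show ?thesis using tpos a by simp
  qed
  have rng2: "\<phi> \<theta> < n * ?T" if "\<theta> \<in> I" for \<theta>
    using rng[OF that] npos dl by (smt (verit) mult_strict_left_mono)
  have est: "\<sigma> * \<Phi>1 s \<ge> 3 / 4 \<and> \<sigma> * \<Psi>' s \<ge> 0" if "sz \<le> s" "s < n * ?T" for s
  proof -
    have spos: "s > 0" using that sz by simp
    have sn: "0 < s / n" "s / n < ?T" using spos that npos by (simp_all add: field_simps)
    have b1: "\<bar>G1 (s / n)\<bar> \<le> (1 - \<mu>) / 8" by (rule G1b[OF sn])
    have b2: "\<bar>h1 s\<bar> \<le> (1 - \<mu>) / 8" using hb1[OF that(1)] by (simp add: h1_def)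
    have s1: "\<sigma> * \<sigma> = 1" using sig' by auto
    have p1: "\<sigma> * \<Phi>1 s = 1 + \<sigma> * G1 (s / n) + \<sigma> * h1 s" by (simp add: \<Phi>1_def algebra_simps s1)
    have "\<bar>\<sigma> * G1 (s / n)\<bar> \<le> (1 - \<mu>) / 8" "\<bar>\<sigma> * h1 s\<bar> \<le> (1 - \<mu>) / 8"
      using b1 b2 sig by (simp_all add: abs_mult \<sigma>_def)
    then have A1: "\<sigma> * \<Phi>1 s \<ge> 1 - (1 - \<mu>) / 4" unfolding p1 by linarith
    have c1: "s * \<bar>deriv G1 (s / n) / n\<bar> \<le> (1 - \<mu>) / 8"
      using G2b[OF sn] npos by (simp add: abs_divide field_simps)
    have c2: "s * \<bar>h2 s\<bar> \<le> (1 - \<mu>) / 8" using hb2[OF that(1)] by (simp add: h2_def)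
    have "\<bar>s * \<Phi>2 s\<bar> = \<bar>s * (deriv G1 (s / n) / n) + s * h2 s\<bar>"
      by (simp add: \<Phi>2_def distrib_left)
    also have "\<dots> \<le> \<bar>s * (deriv G1 (s / n) / n)\<bar> + \<bar>s * h2 s\<bar>" by (rule abs_triangle_ineq)
    also have "\<dots> = s * \<bar>deriv G1 (s / n) / n\<bar> + s * \<bar>h2 s\<bar>" using spos by (simp add: abs_mult)
    finally have "\<bar>s * \<Phi>2 s\<bar> \<le> s * \<bar>deriv G1 (s / n) / n\<bar> + s * \<bar>h2 s\<bar>" .
    then have "\<bar>s * \<Phi>2 s\<bar> \<le> (1 - \<mu>) / 4" using c1 c2 by linarith
    moreover have "\<bar>\<sigma> * (s * \<Phi>2 s)\<bar> = \<bar>s * \<Phi>2 s\<bar>" using sig by (simp only: abs_mult \<sigma>_def)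
    ultimately have A2: "\<bar>\<sigma> * (s * \<Phi>2 s)\<bar> \<le> (1 - \<mu>) / 4" by simp
    have "\<sigma> * \<Psi>' s = s powr (- \<mu>) * ((1 - \<mu>) * (\<sigma> * \<Phi>1 s) + \<sigma> * (s * \<Phi>2 s))"
    proof -
      have "s powr (1 - \<mu>) = s powr (- \<mu>) * s" using spos powr_add[of s "- \<mu>" 1] by simp
      then show ?thesis by (simp add: \<Psi>'_def algebra_simps)
    qed
    moreover have "(1 - \<mu>) * (\<sigma> * \<Phi>1 s) + \<sigma> * (s * \<Phi>2 s) \<ge> 0"
    proof -
      have "(1 - \<mu>) * (\<sigma> * \<Phi>1 s) \<ge> (1 - \<mu>) * (1 - (1 - \<mu>) / 4)"
        using A1 mu by (intro mult_left_mono) auto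
      moreover have "(1 - \<mu>) * (1 - (1 - \<mu>) / 4) \<ge> (1 - \<mu>) / 4"
      proof -
        have q: "(1 - \<mu>) * (1 - (1 - \<mu>) / 4) - (1 - \<mu>) / 4 = (1 - \<mu>) * (2 + \<mu>) / 4"
          by (simp add: field_simps)
        have "(1 - \<mu>) * (2 + \<mu>) \<ge> 0" using mu by (intro mult_nonneg_nonneg) auto
        then show ?thesis using q by linarith
      qed
      ultimately show ?thesis using A2 by linarith
    qed
    ultimately have "\<sigma> * \<Psi>' s \<ge> 0" by simp
    moreover have "\<sigma> * \<Phi>1 s \<ge> 3 / 4"
    proof -
      have "1 - (1 - \<mu>) / 4 \<ge> 3 / 4" using mu by (simp add: field_simps)
      then show ?thesis using A1 by linarith
    qed
    ultimately show ?thesis by simp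
  qed
  have C1: "\<forall>\<theta>\<in>I. tpow n (\<lambda>x. - E x) (tpow \<theta> F \<eta>) \<in> U \<and> f differentiable (at \<theta>)"
  proof
    fix \<theta> assume th: "\<theta> \<in> I"
    note r = rng[OF th]
    have "tpow n (\<lambda>x. - E x) (tpow \<theta> F \<eta>) = X (\<phi> \<theta> / n)"
      using r phipos by (simp add: tF tnX)
    moreover have "0 < \<phi> \<theta> / n" "\<phi> \<theta> / n < ?T"
      using r phipos[of \<theta>] rng2[OF th] npos by (simp_all add: field_simps)
    ultimately have "tpow n (\<lambda>x. - E x) (tpow \<theta> F \<eta>) \<in> U" using inU by (simp add: X_def)
    moreover have "(f has_real_derivative (1 / \<mu>) * \<Psi> (\<phi> \<theta>)) (at \<theta>)"
      using df[OF _ rng2[OF th]] r by simp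
    then have "f differentiable (at \<theta>)"
      using DERIV_deriv_iff_real_differentiable DERIV_imp_deriv by metis
    ultimately show "tpow n (\<lambda>x. - E x) (tpow \<theta> F \<eta>) \<in> U \<and> f differentiable (at \<theta>)" by simp
  qed
  have derivf: "deriv f \<theta> = (1 / \<mu>) * \<Psi> (\<phi> \<theta>)" if "\<theta> \<in> I" for \<theta>
    using df[OF _ rng2[OF that]] rng[OF that] by (simp add: DERIV_imp_deriv)
  have C3: "\<forall>\<theta>\<in>I. \<bar>deriv f \<theta>\<bar> \<ge> (1 / (2 * \<mu>)) * \<theta> powr (1 / \<mu> - 1)"
  proof
    fix \<theta> assume th: "\<theta> \<in> I"
    note r = rng[OF th]
    have e: "\<sigma> * \<Phi>1 (\<phi> \<theta>) \<ge> 3 / 4" using est[OF _ rng2[OF th]] r by simp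
    have "\<bar>\<Phi>1 (\<phi> \<theta>)\<bar> \<ge> 1 / 2"
      using e sig' by auto
    then have "(\<phi> \<theta>) powr (1 - \<mu>) * (1 / 2) \<le> (\<phi> \<theta>) powr (1 - \<mu>) * \<bar>\<Phi>1 (\<phi> \<theta>)\<bar>"
      by (intro mult_left_mono) auto
    then have "(1 / \<mu>) * ((\<phi> \<theta>) powr (1 - \<mu>) * (1 / 2)) \<le> (1 / \<mu>) * \<bar>\<Psi> (\<phi> \<theta>)\<bar>"
      using mu by (intro mult_left_mono) (auto simp: \<Psi>_def abs_mult)
    then show "\<bar>deriv f \<theta>\<bar> \<ge> (1 / (2 * \<mu>)) * \<theta> powr (1 / \<mu> - 1)"
      using mu r by (simp add: derivf[OF th] pw abs_mult)
  qed
  have C2: "mono_on I (deriv f) \<or> monotone_on I (\<le>) (\<ge>) (deriv f)"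
  proof -
    have seg: "sz \<le> x \<and> x < n * ?T" if "a \<in> I" "b \<in> I" "\<phi> a \<le> x" "x \<le> \<phi> b" for a b x
      using rng[OF that(1)] rng2[OF that(2)] that by auto
    have phimono: "\<phi> a \<le> \<phi> b" if "a \<in> I" "b \<in> I" "a \<le> b" for a b
      using rng[OF that(1)] that(3) mu by (simp add: \<phi>_def powr_mono2)
    show ?thesis
    proof (cases "\<sigma> = 1")
      case True
      have "mono_on I (deriv f)"
      proof (rule mono_onI)
        fix a b assume ab: "a \<in> I" "b \<in> I" "a \<le> b"
        have "\<Psi> (\<phi> a) \<le> \<Psi> (\<phi> b)"
        proof (rule DERIV_nonneg_imp_nondecreasing[OF phimono[OF ab]])
          fix x assume "\<phi> a \<le> x" "x \<le> \<phi> b"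
          then have x: "sz \<le> x" "x < n * ?T" using seg[OF ab(1,2)] by auto
          then show "\<exists>y. (\<Psi> has_real_derivative y) (at x) \<and> 0 \<le> y"
            using est[OF x] dPsi[of x] sz True by (intro exI[of _ "\<Psi>' x"]) auto
        qed
        then show "deriv f a \<le> deriv f b" using mu by (simp add: derivf ab divide_right_mono)
      qed
      then show ?thesis by simp
    next
      case False
      then have sm: "\<sigma> = -1" using sig' by simp
      have "monotone_on I (\<le>) (\<ge>) (deriv f)"
      proof (rule monotone_onI)
        fix a b assume ab: "a \<in> I" "b \<in> I" "a \<le> b"
        have "\<Psi> (\<phi> b) \<le> \<Psi> (\<phi> a)"
        proof (rule DERIV_nonpos_imp_nonincreasing[OF phimono[OF ab]])
          fix x assume "\<phi> a \<le> x" "x \<le> \<phi> b"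
          then have x: "sz \<le> x" "x < n * ?T" using seg[OF ab(1,2)] by auto
          then show "\<exists>y. (\<Psi> has_real_derivative y) (at x) \<and> y \<le> 0"
            using est[OF x] dPsi[of x] sz sm by (intro exI[of _ "\<Psi>' x"]) auto
        qed
        then show "deriv f a \<ge> deriv f b" using mu by (simp add: derivf ab divide_right_mono)
      qed
      then show ?thesis by simp
    qed
  qed
  have "(\<forall>\<theta>\<in>I. tpow n (\<lambda>x. - E x) (tpow \<theta> F \<eta>) \<in> U \<and> f differentiable (at \<theta>))
     \<and> (mono_on I (deriv f) \<or> monotone_on I (\<le>) (\<ge>) (deriv f))
     \<and> (\<forall>\<theta>\<in>I. \<bar>deriv f \<theta>\<bar> \<ge> (1 / (2 * \<mu>)) * \<theta> powr (1 / \<mu> - 1))"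
    using C1 C2 C3 by blast
  then show ?thesis unfolding Let_def f_def I_def F_def .
qed

lemma main_assembly:
  fixes Q Qt :: "'a::euclidean_space \<Rightarrow> real"
    and U :: "'a set" and E :: "'a \<Rightarrow> 'a" and \<mu> :: real
  assumes Q_pos: "positive_homogeneous (\<lambda>\<xi>. \<bar>Q \<xi>\<bar>)"
    and E_Exp: "E \<in> Exps Q"
    and U_open: "open U" and U_0: "0 \<in> U"
    and Qt_C2: "C2_on U Qt"
    and mu_lt: "\<mu> < 1"
    and Qt_sub: "strongly_subhomogeneous Qt E 2"
    and mu_pos: "\<mu> > 0"
    and gr: "\<exists>C>0. \<exists>s1\<ge>1. \<forall>s x. s \<ge> s1 \<longrightarrow> norm (tpow s E x) \<le> C * s powr \<mu> * norm x"
  shows "\<forall>K. compact K \<longrightarrow>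
    (\<exists>\<delta>>0. \<exists>\<theta>\<^sub>0\<ge>1. \<forall>n::nat. n \<ge> 1 \<and> \<theta>\<^sub>0 \<le> (real n * \<delta>) powr \<mu> \<longrightarrow>
      (\<forall>y\<in>K. \<forall>\<eta>\<in>{\<eta>. \<bar>Q \<eta>\<bar> = 1}.
        (let f = (\<lambda>\<theta>. Q (tpow \<theta> (\<lambda>x. (1 / \<mu>) *\<^sub>R E x) \<eta>)
                   + real n * Qt (tpow (real n) (\<lambda>x. - E x) (tpow \<theta> (\<lambda>x. (1 / \<mu>) *\<^sub>R E x) \<eta>))
                   + inner y (tpow \<theta> (\<lambda>x. (1 / \<mu>) *\<^sub>R E x) \<eta>));
             I = {\<theta>\<^sub>0 .. (real n * \<delta>) powr \<mu>}
         in (\<forall>\<theta>\<in>I. tpow (real n) (\<lambda>x. - E x) (tpow \<theta> (\<lambda>x. (1 / \<mu>) *\<^sub>R E x) \<eta>) \<in> U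
                     \<and> f differentiable (at \<theta>))
          \<and> (mono_on I (deriv f) \<or> monotone_on I (\<le>) (\<ge>) (deriv f))
          \<and> (\<forall>\<theta>\<in>I. \<bar>deriv f \<theta>\<bar> \<ge> (1 / (2 * \<mu>)) * \<theta> powr (1 / \<mu> - 1)))))"
proof (intro allI impI)
  fix K :: "'a set" assume cK: "compact K"
  let ?P = "\<lambda>\<xi>. \<bar>Q \<xi>\<bar>"
  let ?S = "{\<eta>. \<bar>Q \<eta>\<bar> = 1}"
  have lin: "linear E" using E_Exp by (simp add: Exps_def)
  have homQ: "\<And>t \<xi>. t > 0 \<Longrightarrow> Q (tpow t E \<xi>) = t * Q \<xi>"
    using E_Exp by (simp add: Exps_def homogeneous_wrt_def)
  have P_cont: "continuous_on UNIV ?P" and P_pos: "\<And>x. ?P x = 0 \<longleftrightarrow> x = 0"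
    and P_nn: "\<And>x. ?P x \<ge> 0" and cS: "compact ?S"
    using Q_pos by (auto simp: positive_homogeneous_def)
  have homP: "\<And>t \<xi>. t > 0 \<Longrightarrow> ?P (tpow t E \<xi>) = t * ?P \<xi>"
    using homQ by (simp add: abs_mult)
  obtain R where R: "R > 0" "\<And>\<eta>. \<eta> \<in> ?S \<Longrightarrow> norm \<eta> \<le> R"
    using compact_imp_bounded[OF cS] by (auto simp: bounded_pos)
  obtain Y where Y: "Y > 0" "\<And>y. y \<in> K \<Longrightarrow> norm y \<le> Y"
    using compact_imp_bounded[OF cK] by (auto simp: bounded_pos)
  obtain B where B: "B > 0" "\<And>x. norm (E x) \<le> B * norm x" using linear_bound_pos[OF lin] by blast
  obtain C s1 where C: "C > 0" "s1 \<ge> 1" "\<And>s x. s \<ge> s1 \<Longrightarrow> norm (tpow s E x) \<le> C * s powr \<mu> * norm x"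
    using gr by blast
  obtain r where r: "r > 0" "ball 0 r \<subseteq> U" using U_open U_0 open_contains_ball by blast
  obtain t1 where t1: "t1 > 0" "t1 \<le> 1"
      "\<And>t x. 0 < t \<and> t \<le> t1 \<and> norm x \<le> 1 \<Longrightarrow> norm (tpow t E x) \<le> r / (2 * (R + 1))"
    using lyap_decay[OF P_cont P_pos P_nn lin homP, of "r / (2 * (R + 1))"] r R by auto
  have inU: "tpow t E \<eta> \<in> U" if "0 < t" "t \<le> t1" "\<eta> \<in> ?S" for t \<eta>
  proof -
    have "norm ((1 / (R + 1)) *\<^sub>R \<eta>) \<le> 1" using R(2)[OF that(3)] R(1) by (simp add: field_simps)
    then have "norm (tpow t E ((1 / (R + 1)) *\<^sub>R \<eta>)) \<le> r / (2 * (R + 1))" using t1(3) that by blast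
    then have "(1 / (R + 1)) * norm (tpow t E \<eta>) \<le> r / (2 * (R + 1))"
      using R(1) by (simp add: linear_cmul[OF tpow_linear[OF lin]])
    then have h: "(1 / (R + 1)) * norm (tpow t E \<eta>) \<le> r / (2 * (R + 1))" .
    have Rp: "R + 1 > 0" using R(1) by simp
    have "norm (tpow t E \<eta>) = (R + 1) * ((1 / (R + 1)) * norm (tpow t E \<eta>))" using Rp by simp
    also have "\<dots> \<le> (R + 1) * (r / (2 * (R + 1)))" by (rule mult_left_mono[OF h]) (use Rp in simp)
    also have "\<dots> = r / 2" using Rp by (simp add: field_simps)
    finally have "norm (tpow t E \<eta>) \<le> r / 2" .
    then have "tpow t E \<eta> \<in> ball 0 r" using r by simp
    then show ?thesis using r by blast
  qed
  define \<epsilon>0 where "\<epsilon>0 = (1 - \<mu>) / 8"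
  have e0: "\<epsilon>0 > 0" using mu_lt by (simp add: \<epsilon>0_def)
  from Qt_sub[unfolded strongly_subhomogeneous_def, rule_format, OF e0 cS]
  obtain \<tau> where tau0: "\<tau> > 0" and tau1: "\<forall>k\<le>2. \<forall>t. 0 < t \<and> t < \<tau> \<longrightarrow> (\<forall>\<xi>\<in>?S.
       \<bar>t ^ k * (deriv ^^ k) (\<lambda>s. Qt (tpow s E \<xi>)) t\<bar> \<le> \<epsilon>0 * t)"
    by blast
  have tau: "\<tau> > 0" "\<And>k t \<xi>. k \<le> 2 \<Longrightarrow> 0 < t \<and> t < \<tau> \<Longrightarrow> \<xi> \<in> ?S \<Longrightarrow>
       \<bar>t ^ k * (deriv ^^ k) (\<lambda>s. Qt (tpow s E \<xi>)) t\<bar> \<le> \<epsilon>0 * t"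
    using tau0 tau1 by auto
  obtain q1 :: "'a \<Rightarrow> ('a \<Rightarrow>\<^sub>L real)" and q2 :: "'a \<Rightarrow> ('a \<Rightarrow>\<^sub>L ('a \<Rightarrow>\<^sub>L real))" where
    q: "\<And>x. x \<in> U \<Longrightarrow> (Qt has_derivative blinfun_apply (q1 x)) (at x)"
       "\<And>x. x \<in> U \<Longrightarrow> (q1 has_derivative blinfun_apply (q2 x)) (at x)"
    using Qt_C2 unfolding C2_on_def by blast
  define \<delta> where "\<delta> = min (t1 / 2) (\<tau> / 2)"
  have dl: "\<delta> > 0" "2 * \<delta> \<le> t1" "2 * \<delta> \<le> \<tau>" using t1 tau by (auto simp: \<delta>_def)
  define K1 where "K1 = Y * (B * B + B) * C * R"
  have K1: "K1 > 0" unfolding K1_def using Y(1) B(1) C(1) R(1) by (intro mult_pos_pos add_pos_pos) auto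
  have lim: "((\<lambda>s. s powr (\<mu> - 1)) \<longlongrightarrow> 0) at_top"
    using mu_lt by (intro tendsto_neg_powr filterlim_ident) auto
  have "eventually (\<lambda>s. s powr (\<mu> - 1) < \<epsilon>0 / K1) at_top"
    using order_tendstoD(2)[OF lim] e0 K1 by simp
  then obtain N where N: "\<And>s. s \<ge> N \<Longrightarrow> s powr (\<mu> - 1) < \<epsilon>0 / K1"
    unfolding eventually_at_top_linorder by blast
  define s0 where "s0 = max N s1"
  have s0: "s0 \<ge> 1" "s0 \<ge> s1" "s0 \<ge> N" using C by (auto simp: s0_def)
  have key: "K1 * (s powr \<mu> / s) \<le> \<epsilon>0" if "s \<ge> s0" for s
  proof -
    have spos: "s > 0" using that s0 by simp
    have "s powr \<mu> / s = s powr (\<mu> - 1)" using spos by (simp add: powr_diff)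
    moreover have "s powr (\<mu> - 1) < \<epsilon>0 / K1" using N that s0 by simp
    ultimately show ?thesis using K1 by (simp add: field_simps)
  qed
  have Xb: "norm (tpow s E \<eta>) \<le> C * R * s powr \<mu>" if "s \<ge> s0" "\<eta> \<in> ?S" for s \<eta>
  proof -
    have "norm (tpow s E \<eta>) \<le> C * s powr \<mu> * norm \<eta>" using C(3) that s0 by simp
    also have "\<dots> \<le> C * s powr \<mu> * R" using R(2)[OF that(2)] C by (intro mult_left_mono) auto
    finally show ?thesis by (simp add: mult_ac)
  qed
  define \<theta>0 where "\<theta>0 = max 1 (s0 powr \<mu>)"
  have main: "\<forall>n::nat. n \<ge> 1 \<and> \<theta>0 \<le> (real n * \<delta>) powr \<mu> \<longrightarrow>
      (\<forall>y\<in>K. \<forall>\<eta>\<in>{\<eta>. \<bar>Q \<eta>\<bar> = 1}.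
        (let f = (\<lambda>\<theta>. Q (tpow \<theta> (\<lambda>x. (1 / \<mu>) *\<^sub>R E x) \<eta>)
                   + real n * Qt (tpow (real n) (\<lambda>x. - E x) (tpow \<theta> (\<lambda>x. (1 / \<mu>) *\<^sub>R E x) \<eta>))
                   + inner y (tpow \<theta> (\<lambda>x. (1 / \<mu>) *\<^sub>R E x) \<eta>));
             I = {\<theta>0 .. (real n * \<delta>) powr \<mu>}
         in (\<forall>\<theta>\<in>I. tpow (real n) (\<lambda>x. - E x) (tpow \<theta> (\<lambda>x. (1 / \<mu>) *\<^sub>R E x) \<eta>) \<in> U
                     \<and> f differentiable (at \<theta>))
          \<and> (mono_on I (deriv f) \<or> monotone_on I (\<le>) (\<ge>) (deriv f))
          \<and> (\<forall>\<theta>\<in>I. \<bar>deriv f \<theta>\<bar> \<ge> (1 / (2 * \<mu>)) * \<theta> powr (1 / \<mu> - 1))))"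
  proof (intro allI impI ballI)
    fix n :: nat and y \<eta> assume n: "1 \<le> n \<and> \<theta>0 \<le> (real n * \<delta>) powr \<mu>" and y: "y \<in> K"
      and \<eta>: "\<eta> \<in> ?S"
    show "let f = (\<lambda>\<theta>. Q (tpow \<theta> (\<lambda>x. (1 / \<mu>) *\<^sub>R E x) \<eta>)
                   + real n * Qt (tpow (real n) (\<lambda>x. - E x) (tpow \<theta> (\<lambda>x. (1 / \<mu>) *\<^sub>R E x) \<eta>))
                   + inner y (tpow \<theta> (\<lambda>x. (1 / \<mu>) *\<^sub>R E x) \<eta>));
             I = {\<theta>0 .. (real n * \<delta>) powr \<mu>}
         in (\<forall>\<theta>\<in>I. tpow (real n) (\<lambda>x. - E x) (tpow \<theta> (\<lambda>x. (1 / \<mu>) *\<^sub>R E x) \<eta>) \<in> U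
                     \<and> f differentiable (at \<theta>))
          \<and> (mono_on I (deriv f) \<or> monotone_on I (\<le>) (\<ge>) (deriv f))
          \<and> (\<forall>\<theta>\<in>I. \<bar>deriv f \<theta>\<bar> \<ge> (1 / (2 * \<mu>)) * \<theta> powr (1 / \<mu> - 1))"
    proof (rule core[where qa=q1 and qb=q2 and sz=s0])
      show "linear E" by (rule lin)
      show "0 < \<mu>" "\<mu> < 1" by (rule mu_pos, rule mu_lt)
      show "\<And>t. t > 0 \<Longrightarrow> Q (tpow t E \<eta>) = t * Q \<eta>" by (rule homQ)
      show "\<bar>Q \<eta>\<bar> = 1" using \<eta> by simp
      show "real n \<ge> 1" using n by simp
      show "\<delta> > 0" by (rule dl(1))
      show "\<And>t. 0 < t \<Longrightarrow> t < 2 * \<delta> \<Longrightarrow> tpow t E \<eta> \<in> U" using inU \<eta> dl by auto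
      show "\<And>x. x \<in> U \<Longrightarrow> (Qt has_derivative blinfun_apply (q1 x)) (at x)" by (rule q(1))
      show "\<And>x. x \<in> U \<Longrightarrow> (q1 has_derivative blinfun_apply (q2 x)) (at x)" by (rule q(2))
      show "\<And>t. 0 < t \<Longrightarrow> t < 2 * \<delta> \<Longrightarrow> \<bar>t * deriv (\<lambda>s. Qt (tpow s E \<eta>)) t\<bar> \<le> (1 - \<mu>) / 8 * t"
        using tau(2)[of 1 _ \<eta>] \<eta> dl by (auto simp: \<epsilon>0_def)
      show "\<And>t. 0 < t \<Longrightarrow> t < 2 * \<delta> \<Longrightarrow> \<bar>t ^ 2 * deriv (deriv (\<lambda>s. Qt (tpow s E \<eta>))) t\<bar> \<le> (1 - \<mu>) / 8 * t"
        using tau(2)[of 2 _ \<eta>] \<eta> dl by (auto simp: \<epsilon>0_def numeral_2_eq_2)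
      show "\<And>s. s \<ge> s0 \<Longrightarrow> \<bar>inner y ((1/s) *\<^sub>R E (tpow s E \<eta>))\<bar> \<le> (1 - \<mu>) / 8"
      proof -
        fix s assume s: "s \<ge> s0"
        have spos: "s > 0" using s s0 by simp
        have "\<bar>inner y ((1/s) *\<^sub>R E (tpow s E \<eta>))\<bar> \<le> norm y * norm ((1/s) *\<^sub>R E (tpow s E \<eta>))"
          by (rule Cauchy_Schwarz_ineq2)
        also have "\<dots> \<le> Y * ((1/s) * (B * (C * R * s powr \<mu>)))"
        proof (intro mult_mono)
          show "norm y \<le> Y" using Y(2)[OF y] .
          have "norm (E (tpow s E \<eta>)) \<le> B * (C * R * s powr \<mu>)"
            using B(2)[of "tpow s E \<eta>"] Xb[OF s \<eta>] B(1) by (smt (verit) mult_left_mono)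
          then show "norm ((1/s) *\<^sub>R E (tpow s E \<eta>)) \<le> (1/s) * (B * (C * R * s powr \<mu>))"
            using spos by (simp add: divide_right_mono)
        qed (use Y in auto)
        also have "\<dots> = (Y * B * C * R) * (s powr \<mu> / s)" by (simp add: field_simps)
        also have "\<dots> \<le> K1 * (s powr \<mu> / s)"
        proof (rule mult_right_mono)
          have "Y * B * C * R \<le> Y * (B * B + B) * C * R" using Y B C R by (simp add: mult_left_mono mult_right_mono)
          then show "Y * B * C * R \<le> K1" by (simp add: K1_def)
          show "0 \<le> s powr \<mu> / s" using spos by simp
        qed
        also have "\<dots> \<le> (1 - \<mu>) / 8" using key[OF s] by (simp add: \<epsilon>0_def)
        finally show "\<bar>inner y ((1/s) *\<^sub>R E (tpow s E \<eta>))\<bar> \<le> (1 - \<mu>) / 8" .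
      qed
      show "\<And>s. s \<ge> s0 \<Longrightarrow> s * \<bar>(inner y (E (E (tpow s E \<eta>))) - inner y (E (tpow s E \<eta>))) / s^2\<bar> \<le> (1 - \<mu>) / 8"
      proof -
        fix s assume s: "s \<ge> s0"
        have spos: "s > 0" using s s0 by simp
        let ?X = "tpow s E \<eta>"
        have nX: "norm ?X \<le> C * R * s powr \<mu>" by (rule Xb[OF s \<eta>])
        have a: "\<bar>inner y (E (E ?X))\<bar> \<le> Y * (B * B * (C * R * s powr \<mu>))"
        proof -
          have "\<bar>inner y (E (E ?X))\<bar> \<le> norm y * norm (E (E ?X))" by (rule Cauchy_Schwarz_ineq2)
          also have "\<dots> \<le> Y * (B * B * (C * R * s powr \<mu>))"
          proof (intro mult_mono)
            show "norm y \<le> Y" using Y(2)[OF y] .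
            have "norm (E (E ?X)) \<le> B * norm (E ?X)" by (rule B(2))
            also have "\<dots> \<le> B * (B * norm ?X)" using B by (intro mult_left_mono) auto
            also have "\<dots> \<le> B * (B * (C * R * s powr \<mu>))" using B nX by (intro mult_left_mono) auto
            finally show "norm (E (E ?X)) \<le> B * B * (C * R * s powr \<mu>)" by (simp add: mult_ac)
          qed (use Y in auto)
          finally show ?thesis .
        qed
        have b: "\<bar>inner y (E ?X)\<bar> \<le> Y * (B * (C * R * s powr \<mu>))"
        proof -
          have "\<bar>inner y (E ?X)\<bar> \<le> norm y * norm (E ?X)" by (rule Cauchy_Schwarz_ineq2)
          also have "\<dots> \<le> Y * (B * (C * R * s powr \<mu>))"
          proof (intro mult_mono)
            show "norm y \<le> Y" using Y(2)[OF y] .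
            have "norm (E ?X) \<le> B * norm ?X" by (rule B(2))
            also have "\<dots> \<le> B * (C * R * s powr \<mu>)" using B nX by (intro mult_left_mono) auto
            finally show "norm (E ?X) \<le> B * (C * R * s powr \<mu>)" .
          qed (use Y in auto)
          finally show ?thesis .
        qed
        have "s * \<bar>(inner y (E (E ?X)) - inner y (E ?X)) / s^2\<bar> = \<bar>inner y (E (E ?X)) - inner y (E ?X)\<bar> / s"
          using spos by (simp add: abs_divide power2_eq_square field_simps)
        also have "\<dots> \<le> (\<bar>inner y (E (E ?X))\<bar> + \<bar>inner y (E ?X)\<bar>) / s"
          using spos by (intro divide_right_mono) auto
        also have "\<dots> \<le> (Y * (B * B * (C * R * s powr \<mu>)) + Y * (B * (C * R * s powr \<mu>))) / s"
          using spos a b by (intro divide_right_mono) auto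
        also have "\<dots> = K1 * (s powr \<mu> / s)" by (simp add: K1_def field_simps)
        also have "\<dots> \<le> (1 - \<mu>) / 8" using key[OF s] by (simp add: \<epsilon>0_def)
        finally show "s * \<bar>(inner y (E (E ?X)) - inner y (E ?X)) / s^2\<bar> \<le> (1 - \<mu>) / 8" .
      qed
      show "s0 > 0" using s0 by simp
      show "\<theta>0 \<ge> 1" "s0 powr \<mu> \<le> \<theta>0" by (simp_all add: \<theta>0_def)
    qed
  qed
  have th1: "1 \<le> \<theta>0" by (simp add: \<theta>0_def)
  show "(\<exists>\<delta>>0. \<exists>\<theta>\<^sub>0\<ge>1. \<forall>n::nat. n \<ge> 1 \<and> \<theta>\<^sub>0 \<le> (real n * \<delta>) powr \<mu> \<longrightarrow>
      (\<forall>y\<in>K. \<forall>\<eta>\<in>{\<eta>. \<bar>Q \<eta>\<bar> = 1}.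
        (let f = (\<lambda>\<theta>. Q (tpow \<theta> (\<lambda>x. (1 / \<mu>) *\<^sub>R E x) \<eta>)
                   + real n * Qt (tpow (real n) (\<lambda>x. - E x) (tpow \<theta> (\<lambda>x. (1 / \<mu>) *\<^sub>R E x) \<eta>))
                   + inner y (tpow \<theta> (\<lambda>x. (1 / \<mu>) *\<^sub>R E x) \<eta>));
             I = {\<theta>\<^sub>0 .. (real n * \<delta>) powr \<mu>}
         in (\<forall>\<theta>\<in>I. tpow (real n) (\<lambda>x. - E x) (tpow \<theta> (\<lambda>x. (1 / \<mu>) *\<^sub>R E x) \<eta>) \<in> U
                     \<and> f differentiable (at \<theta>))
          \<and> (mono_on I (deriv f) \<or> monotone_on I (\<le>) (\<ge>) (deriv f))
          \<and> (\<forall>\<theta>\<in>I. \<bar>deriv f \<theta>\<bar> \<ge> (1 / (2 * \<mu>)) * \<theta> powr (1 / \<mu> - 1)))))"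
    by (rule exI[of _ \<delta>], rule conjI[OF dl(1)], rule exI[of _ \<theta>0], rule conjI[OF th1 main])
qed

theorem mainTheorem7:
  fixes Q Qt :: "'a::euclidean_space \<Rightarrow> real"
    and U :: "'a set" and E :: "'a \<Rightarrow> 'a" and \<mu> :: real
  assumes Q_cont: "continuous_on UNIV Q"
    and Q_pos: "positive_homogeneous (\<lambda>\<xi>. \<bar>Q \<xi>\<bar>)"
    and E_Exp: "E \<in> Exps Q"
    and mu_def: "\<mu> = trace_op E"
    and U_open: "open U" and U_0: "0 \<in> U"
    and Qt_C2: "C2_on U Qt"
    and mu_lt: "\<mu> < 1"
    and Qt_sub: "strongly_subhomogeneous Qt E 2"
  shows "\<forall>K. compact K \<longrightarrow>
    (\<exists>\<delta>>0. \<exists>\<theta>\<^sub>0\<ge>1. \<forall>n::nat. n \<ge> 1 \<and> \<theta>\<^sub>0 \<le> (real n * \<delta>) powr \<mu> \<longrightarrow>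
      (\<forall>y\<in>K. \<forall>\<eta>\<in>{\<eta>. \<bar>Q \<eta>\<bar> = 1}.
        (let f = (\<lambda>\<theta>. Q (tpow \<theta> (\<lambda>x. (1 / \<mu>) *\<^sub>R E x) \<eta>)
                   + real n * Qt (tpow (real n) (\<lambda>x. - E x) (tpow \<theta> (\<lambda>x. (1 / \<mu>) *\<^sub>R E x) \<eta>))
                   + inner y (tpow \<theta> (\<lambda>x. (1 / \<mu>) *\<^sub>R E x) \<eta>));
             I = {\<theta>\<^sub>0 .. (real n * \<delta>) powr \<mu>}
         in (\<forall>\<theta>\<in>I. tpow (real n) (\<lambda>x. - E x) (tpow \<theta> (\<lambda>x. (1 / \<mu>) *\<^sub>R E x) \<eta>) \<in> U
                     \<and> f differentiable (at \<theta>))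
          \<and> (mono_on I (deriv f) \<or> monotone_on I (\<le>) (\<ge>) (deriv f))
          \<and> (\<forall>\<theta>\<in>I. \<bar>deriv f \<theta>\<bar> \<ge> (1 / (2 * \<mu>)) * \<theta> powr (1 / \<mu> - 1)))))"
  proof -
  let ?P = "\<lambda>\<xi>. \<bar>Q \<xi>\<bar>"
  have lin: "linear E" using E_Exp by (simp add: Exps_def)
  have homQ: "\<And>t \<xi>. t > 0 \<Longrightarrow> Q (tpow t E \<xi>) = t * Q \<xi>"
    using E_Exp by (simp add: Exps_def homogeneous_wrt_def)
  have P_cont: "continuous_on UNIV ?P" and P_pos: "\<And>x. ?P x = 0 \<longleftrightarrow> x = 0"
    and P_nn: "\<And>x. ?P x \<ge> 0"
    using Q_pos by (auto simp: positive_homogeneous_def)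
  have homP: "\<And>t \<xi>. t > 0 \<Longrightarrow> ?P (tpow t E \<xi>) = t * ?P \<xi>"
    using homQ by (simp add: abs_mult)
  have mu_pos: "\<mu> > 0" unfolding mu_def by (rule trace_pos[OF P_cont P_pos P_nn lin homP])
  have gr: "\<exists>C>0. \<exists>s1\<ge>1. \<forall>s x. s \<ge> s1 \<longrightarrow> norm (tpow s E x) \<le> C * s powr \<mu> * norm x"
    unfolding mu_def by (rule growth[OF P_cont P_pos P_nn lin homP])
  show ?thesis by (rule main_assembly[OF Q_pos E_Exp U_open U_0 Qt_C2 mu_lt Qt_sub mu_pos gr])
qed

end
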